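(* Let $L\ge 2$, $d\ge1$, let $x_0,\dots,x_{L-1}\in\mathbb{R}^d$ be pairwise distinct templates of equal Euclidean norm, and let $n_0,\dots,n_{M-1}$ be i.i.d. $\mathcal{N}(0,I_{d\times d})$. For $\beta\in\mathbb{R}\setminus\{0\}$ define $p_{i,\beta}^{(\ell)}=\frac{\exp(\beta\, n_i^T x_\ell)}{\sum_{r=0}^{L-1}\exp(\beta\, n_i^Tx_r)}$ and $\hat{x}_\ell^{(\beta)}=\frac{\sum_{i=0}^{M-1}p_{i,\beta}^{(\ell)}n_i}{\sum_{i=0}^{M-1}p_{i,\beta}^{(\ell)}}$. 1. For every $0\le\ell\le L-1$ (with $\mathcal{A}_\ell$ nonempty), almost surely $\lim_{\beta\to\infty}\hat{x}_\ell^{(\beta)}=\frac{1}{|\mathcal{A}_\ell|}\sum_{n_i\in\mathcal{A}_\ell}n_i$, where $\mathcal{A}_\ell=\{n_i: \arg\max_{0\le r\le L-1}\langle n_i,x_r\rangle=\ell\}$; i.e., the $\beta$-soft-assignment estimator coincides in the limit $\beta\to\infty$ with the hard-assignment estimator. 2. For every $0\le\ell\le L-1$, almost surely $\lim_{\beta\to 0}\lim_{M\to\infty}\frac{\hat{x}_\ell^{(\beta)}}{\beta}=x_\ell-\frac{1}{L}\sum_{r=0}^{L-1}x_r$.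
   Context: The argmax defining $\mathcal{A}_\ell$ is almost surely unique. The estimator $\frac{1}{|\mathcal{A}_\ell|}\sum_{n_i\in\mathcal{A}_\ell}n_i$ is the output of the hard-assignment algorithm (one iteration of $K$-means with initial centroids $x_0,\dots,x_{L-1}$). *)

theory Defs
  imports "HOL-Probability.Probability"
begin

definition softp :: "nat \<Rightarrow> (nat \<Rightarrow> 'v::real_inner) \<Rightarrow> 'v \<Rightarrow> real \<Rightarrow> nat \<Rightarrow> real" where
  "softp L x v \<beta> l = exp (\<beta> * (v \<bullet> x l)) / (\<Sum>r<L. exp (\<beta> * (v \<bullet> x r)))"

definition xhat :: "nat \<Rightarrow> (nat \<Rightarrow> 'v::real_inner) \<Rightarrow> (nat \<Rightarrow> 'v) \<Rightarrow> nat \<Rightarrow> real \<Rightarrow> nat \<Rightarrow> 'v" where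
  "xhat L x ns m \<beta> l =
     inverse (\<Sum>i<m. softp L x (ns i) \<beta> l) *\<^sub>R (\<Sum>i<m. softp L x (ns i) \<beta> l *\<^sub>R ns i)"

text \<open>Index set of A_l: samples whose (unique) argmax over r of <n_i, x_r> is l.\<close>
definition hard_set :: "nat \<Rightarrow> (nat \<Rightarrow> 'v::real_inner) \<Rightarrow> (nat \<Rightarrow> 'v) \<Rightarrow> nat \<Rightarrow> nat \<Rightarrow> nat set" where
  "hard_set L x ns m l = {i. i < m \<and> (\<forall>r<L. r \<noteq> l \<longrightarrow> ns i \<bullet> x r < ns i \<bullet> x l)}"

definition hard_est :: "nat \<Rightarrow> (nat \<Rightarrow> 'v::real_inner) \<Rightarrow> (nat \<Rightarrow> 'v) \<Rightarrow> nat \<Rightarrow> nat \<Rightarrow> 'v" where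
  "hard_est L x ns m l =
     (1 / real (card (hard_set L x ns m l))) *\<^sub>R (\<Sum>i\<in>hard_set L x ns m l. ns i)"

end

theory Submission imports Defs begin

definition c0 :: "nat \<Rightarrow> (nat \<Rightarrow> 'v::real_inner) \<Rightarrow> real" where
  "c0 L x = 2 * (\<Sum>r<L. norm (x r))"

lemma softp_pos: "l < L \<Longrightarrow> 0 < softp L x v \<beta> l"
  unfolding softp_def
  by (intro divide_pos_pos sum_pos) auto

lemma softp_nonneg: "l < L \<Longrightarrow> 0 \<le> softp L x v \<beta> l"
  using softp_pos[of l L x v \<beta>] by simp

lemma softp_le1: "l < L \<Longrightarrow> softp L x v \<beta> l \<le> 1"
  unfolding softp_def
  by (subst divide_le_eq_1_pos) (auto intro!: sum_pos member_le_sum)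

lemma softp_zero: "l < L \<Longrightarrow> softp L x v 0 l = 1 / real L"
  unfolding softp_def by simp

lemma softp_deriv:
  fixes v :: "'v::real_inner" and x :: "nat \<Rightarrow> 'v"
  defines "a \<equiv> \<lambda>r. v \<bullet> x r"
  assumes "l < L"
  shows "((\<lambda>b. softp L x v b l) has_real_derivative
     (a l * exp (t * a l) * (\<Sum>r<L. exp (t * a r)) - exp (t * a l) * (\<Sum>r<L. a r * exp (t * a r)))
       / (\<Sum>r<L. exp (t * a r))\<^sup>2) (at t)"
proof -
  have "(\<Sum>r<L. exp (t * a r)) > 0" using assms by (intro sum_pos) auto
  then have S: "(\<Sum>r<L. exp (t * a r)) \<noteq> 0" by simp
  have "((\<lambda>b. exp (b * a l) / (\<Sum>r<L. exp (b * a r))) has_real_derivative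
     (exp (t * a l) * a l * (\<Sum>r<L. exp (t * a r)) - exp (t * a l) * (\<Sum>r<L. exp (t * a r) * a r))
       / (\<Sum>r<L. exp (t * a r)) ^ 2) (at t)"
    by (rule derivative_eq_intros refl S)+ (simp add: power2_eq_square)
  then show ?thesis unfolding softp_def a_def
    by (simp add: mult.commute mult.left_commute)
qed

lemma softp_deriv_bound:
  fixes v :: "'v::real_inner" and x :: "nat \<Rightarrow> 'v"
  defines "a \<equiv> \<lambda>r. v \<bullet> x r"
  assumes "l < L"
  shows "\<bar>(a l * exp (t * a l) * (\<Sum>r<L. exp (t * a r)) - exp (t * a l) * (\<Sum>r<L. a r * exp (t * a r)))
       / (\<Sum>r<L. exp (t * a r))\<^sup>2\<bar> \<le> c0 L x * norm v"
proof -
  define S where "S = (\<Sum>r<L. exp (t * a r))"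
  define S' where "S' = (\<Sum>r<L. a r * exp (t * a r))"
  define A where "A = (\<Sum>r<L. \<bar>a r\<bar>)"
  define e where "e = exp (t * a l)"
  have Spos: "S > 0" unfolding S_def using assms by (intro sum_pos) auto
  have eS: "e \<le> S" unfolding e_def S_def using assms by (intro member_le_sum) auto
  have e0: "e > 0" unfolding e_def by simp
  have S'b: "\<bar>S'\<bar> \<le> A * S"
  proof -
    have "\<bar>S'\<bar> \<le> (\<Sum>r<L. \<bar>a r\<bar> * exp (t * a r))" unfolding S'_def
      by (rule order_trans[OF sum_abs]) (simp add: abs_mult)
    also have "\<dots> \<le> (\<Sum>r<L. A * exp (t * a r))"
      by (intro sum_mono mult_right_mono) (auto simp: A_def intro!: member_le_sum)
    finally show ?thesis by (simp add: S_def sum_distrib_left)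
  qed
  have al: "\<bar>a l\<bar> \<le> A" unfolding A_def using assms by (intro member_le_sum) auto
  have A: "A \<le> norm v * (\<Sum>r<L. norm (x r))"
    unfolding A_def a_def sum_distrib_left
    by (intro sum_mono Cauchy_Schwarz_ineq2)
  have eq: "(a l * e * S - e * S') / S\<^sup>2 = (e / S) * (a l - S' / S)"
    using Spos by (simp add: field_simps power2_eq_square)
  have "\<bar>(e / S) * (a l - S' / S)\<bar> \<le> 1 * (A + A)"
  proof (subst abs_mult, rule mult_mono)
    show "\<bar>e / S\<bar> \<le> 1" using Spos e0 eS by simp
    have "\<bar>S' / S\<bar> = \<bar>S'\<bar> / S" using Spos by (simp add: abs_divide)
    also have "\<dots> \<le> A" using S'b Spos by (simp add: pos_divide_le_eq)
    finally have "\<bar>S' / S\<bar> \<le> A" .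
    then show "\<bar>a l - S' / S\<bar> \<le> A + A" using al by linarith
  qed simp_all
  also have "\<dots> \<le> c0 L x * norm v" using A by (simp add: c0_def mult.commute)
  finally have "\<bar>(e / S) * (a l - S' / S)\<bar> \<le> c0 L x * norm v" .
  then have "\<bar>(a l * e * S - e * S') / S\<^sup>2\<bar> \<le> c0 L x * norm v" by (simp only: eq)
  then show ?thesis unfolding S_def S'_def e_def .
qed

lemma softp_lip:
  fixes v :: "'v::real_inner" and x :: "nat \<Rightarrow> 'v"
  assumes "l < L"
  shows "\<bar>softp L x v b l - softp L x v b' l\<bar> \<le> c0 L x * norm v * \<bar>b - b'\<bar>"
proof -
  have *: "\<bar>softp L x v b l - softp L x v b' l\<bar> \<le> c0 L x * norm v * \<bar>b - b'\<bar>" if lt: "b' < b" for b b'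
  proof -
    define D where "D = (\<lambda>t. ((v \<bullet> x l) * exp (t * (v \<bullet> x l)) * (\<Sum>r<L. exp (t * (v \<bullet> x r))) - exp (t * (v \<bullet> x l)) * (\<Sum>r<L. (v \<bullet> x r) * exp (t * (v \<bullet> x r))))
       / (\<Sum>r<L. exp (t * (v \<bullet> x r)))\<^sup>2)"
    have "\<exists>z>b'. z < b \<and> softp L x v b l - softp L x v b' l = (b - b') * D z"
      by (rule MVT2[OF lt]) (unfold D_def, rule softp_deriv[OF assms])
    then obtain z where "softp L x v b l - softp L x v b' l = (b - b') * D z" by blast
    then have "\<bar>softp L x v b l - softp L x v b' l\<bar> = \<bar>b - b'\<bar> * \<bar>D z\<bar>" by (simp add: abs_mult)
    also have "\<dots> \<le> \<bar>b - b'\<bar> * (c0 L x * norm v)"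
    proof (rule mult_left_mono)
      show "\<bar>D z\<bar> \<le> c0 L x * norm v" unfolding D_def by (rule softp_deriv_bound[OF assms])
    qed simp
    finally show ?thesis by (simp add: mult_ac)
  qed
  show ?thesis
  proof (cases b' b rule: linorder_cases)
    case less then show ?thesis using * by blast
  next
    case greater then show ?thesis using *[OF greater] by (simp add: abs_minus_commute)
  qed simp
qed

lemma softp_deriv0:
  fixes v :: "'v::real_inner" and x :: "nat \<Rightarrow> 'v"
  assumes "l < L"
  shows "((\<lambda>b. (softp L x v b l - 1 / real L) / b) \<longlongrightarrow>
     (v \<bullet> x l) / real L - (\<Sum>r<L. v \<bullet> x r) / (real L)\<^sup>2) (at 0)"
proof -
  have "((\<lambda>b. softp L x v b l) has_real_derivative
     ((v \<bullet> x l) * exp (0 * (v \<bullet> x l)) * (\<Sum>r<L. exp (0 * (v \<bullet> x r))) - exp (0 * (v \<bullet> x l)) * (\<Sum>r<L. (v \<bullet> x r) * exp (0 * (v \<bullet> x r))))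
       / (\<Sum>r<L. exp (0 * (v \<bullet> x r)))\<^sup>2) (at 0)"
    using softp_deriv[OF assms, where v=v and x=x and t=0] by simp
  then have lim: "((\<lambda>b. (softp L x v b l - softp L x v 0 l) / (b - 0)) \<longlongrightarrow>
     ((v \<bullet> x l) * real L - (\<Sum>r<L. v \<bullet> x r)) / (real L)\<^sup>2) (at 0)"
    unfolding has_field_derivative_iff by simp
  have e2: "((v \<bullet> x l) * real L - (\<Sum>r<L. v \<bullet> x r)) / (real L)\<^sup>2 =
      (v \<bullet> x l) / real L - (\<Sum>r<L. v \<bullet> x r) / (real L)\<^sup>2"
    using assms by (simp add: field_simps power2_eq_square)
  have e1: "(\<lambda>b. (softp L x v b l - softp L x v 0 l) / (b - 0)) = (\<lambda>b. (softp L x v b l - 1 / real L) / b)"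
    by (simp add: softp_def)
  show ?thesis using lim unfolding e1 e2 .
qed


lemma softp_alt:
  assumes "l < L"
  shows "softp L x v b l = inverse (\<Sum>r<L. exp (b * (v \<bullet> x r - v \<bullet> x l)))"
proof -
  have "(\<Sum>r<L. exp (b * (v \<bullet> x r - v \<bullet> x l))) = (\<Sum>r<L. exp (b * (v \<bullet> x r))) / exp (b * (v \<bullet> x l))"
    by (simp add: sum_divide_distrib right_diff_distrib exp_diff)
  then show ?thesis unfolding softp_def by simp
qed

lemma softp_top1:
  assumes "l < L" and "\<And>r. r < L \<Longrightarrow> r \<noteq> l \<Longrightarrow> v \<bullet> x r < v \<bullet> x l"
  shows "((\<lambda>b. softp L x v b l) \<longlongrightarrow> 1) at_top"
proof -
  have "((\<lambda>b. \<Sum>r<L. exp (b * (v \<bullet> x r - v \<bullet> x l))) \<longlongrightarrow> (\<Sum>r<L. if r = l then 1 else 0)) at_top"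
  proof (rule tendsto_sum)
    fix r assume r: "r \<in> {..<L}"
    show "((\<lambda>b. exp (b * (v \<bullet> x r - v \<bullet> x l))) \<longlongrightarrow> (if r = l then 1 else 0)) at_top"
    proof (cases "r = l")
      case False
      then have c: "v \<bullet> x r - v \<bullet> x l < 0" using assms(2)[of r] r by simp
      have "filterlim (\<lambda>b. (v \<bullet> x r - v \<bullet> x l) * b) at_bot at_top"
        by (rule filterlim_tendsto_neg_mult_at_bot[OF tendsto_const c filterlim_ident])
      then have "filterlim (\<lambda>b. b * (v \<bullet> x r - v \<bullet> x l)) at_bot at_top"
        by (simp add: mult.commute)
      then have "((\<lambda>b. exp (b * (v \<bullet> x r - v \<bullet> x l))) \<longlongrightarrow> 0) at_top"
        by (rule filterlim_compose[OF exp_at_bot])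
      then show ?thesis using False by simp
    qed simp
  qed
  moreover have "(\<Sum>r<L. if r = l then 1 else 0) = (1::real)" using assms(1) by simp
  ultimately have "((\<lambda>b. inverse (\<Sum>r<L. exp (b * (v \<bullet> x r - v \<bullet> x l)))) \<longlongrightarrow> inverse 1) at_top"
    by (intro tendsto_inverse) auto
  then show ?thesis unfolding softp_alt[OF assms(1)] by simp
qed

lemma softp_top0:
  assumes "l < L" "r < L" "v \<bullet> x l < v \<bullet> x r"
  shows "((\<lambda>b. softp L x v b l) \<longlongrightarrow> 0) at_top"
proof (rule tendsto_sandwich[where f="\<lambda>_. 0" and h="\<lambda>b. exp (b * (v \<bullet> x l - v \<bullet> x r))"])
  show "\<forall>\<^sub>F b in at_top. 0 \<le> softp L x v b l" by (intro always_eventually allI less_imp_le softp_pos[OF assms(1)])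
  show "\<forall>\<^sub>F b in at_top. softp L x v b l \<le> exp (b * (v \<bullet> x l - v \<bullet> x r))"
  proof (rule always_eventually, rule allI)
    fix b
    have "exp (b * (v \<bullet> x r)) \<le> (\<Sum>r<L. exp (b * (v \<bullet> x r)))"
      using assms(2) by (intro member_le_sum) auto
    moreover have "0 < (\<Sum>r<L. exp (b * (v \<bullet> x r)))" using assms(2) by (intro sum_pos) auto
    ultimately have "exp (b * (v \<bullet> x l)) / (\<Sum>r<L. exp (b * (v \<bullet> x r))) \<le> exp (b * (v \<bullet> x l)) / exp (b * (v \<bullet> x r))"
      by (intro divide_left_mono) auto
    then show "softp L x v b l \<le> exp (b * (v \<bullet> x l - v \<bullet> x r))"
      unfolding softp_def by (simp add: right_diff_distrib exp_diff)
  qed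
  have c: "v \<bullet> x l - v \<bullet> x r < 0" using assms(3) by simp
  have "filterlim (\<lambda>b. (v \<bullet> x l - v \<bullet> x r) * b) at_bot at_top"
    by (rule filterlim_tendsto_neg_mult_at_bot[OF tendsto_const c filterlim_ident])
  then have "filterlim (\<lambda>b. b * (v \<bullet> x l - v \<bullet> x r)) at_bot at_top"
    by (simp add: mult.commute)
  then show "((\<lambda>b. exp (b * (v \<bullet> x l - v \<bullet> x r))) \<longlongrightarrow> 0) at_top"
    by (rule filterlim_compose[OF exp_at_bot])
qed simp

lemma unif_conv:
  fixes f :: "nat \<Rightarrow> real \<Rightarrow> real" and F :: "real \<Rightarrow> real" and K :: "nat \<Rightarrow> real"
  assumes rat: "\<And>q. q \<in> \<rat> \<Longrightarrow> (\<lambda>m. f m q) \<longlonglongrightarrow> F q"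
    and K: "K \<longlonglongrightarrow> Klim"
    and lipf: "\<And>m a b. \<bar>f m a - f m b\<bar> \<le> K m * \<bar>a - b\<bar>"
    and lipF: "\<And>a b. \<bar>F a - F b\<bar> \<le> c * \<bar>a - b\<bar>"
  shows "(\<lambda>m. f m t) \<longlonglongrightarrow> F t"
proof (rule tendstoI)
  fix e :: real assume e: "e > 0"
  define B where "B = \<bar>Klim\<bar> + 1 + \<bar>c\<bar>"
  have B: "B > 0" unfolding B_def by simp
  define \<delta> where "\<delta> = e / (2 * B)"
  have d: "\<delta> > 0" unfolding \<delta>_def using e B by simp
  obtain q where q: "q \<in> \<rat>" "t - \<delta> < q" "q < t"
    using Rats_dense_in_real[of "t - \<delta>" t] d by auto
  have tq: "\<bar>t - q\<bar> < \<delta>" using q by simp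
  have ev1: "\<forall>\<^sub>F m in sequentially. dist (f m q) (F q) < e / 2"
    using tendstoD[OF rat[OF q(1)], of "e/2"] e by simp
  have ev2: "\<forall>\<^sub>F m in sequentially. dist (K m) Klim < 1"
    using tendstoD[OF K] by simp
  show "\<forall>\<^sub>F m in sequentially. dist (f m t) (F t) < e"
    using ev1 ev2
  proof eventually_elim
    case (elim m)
    have "\<bar>K m - Klim\<bar> < 1" using elim(2) by (simp add: dist_real_def)
    then have Km: "K m \<le> \<bar>Klim\<bar> + 1" by linarith
    have 1: "\<bar>f m t - f m q\<bar> \<le> (\<bar>Klim\<bar> + 1) * \<bar>t - q\<bar>"
      using lipf[of m t q] mult_right_mono[OF Km, of "\<bar>t - q\<bar>"] by simp
    have 2: "\<bar>F q - F t\<bar> \<le> \<bar>c\<bar> * \<bar>t - q\<bar>"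
    proof -
      have "\<bar>F q - F t\<bar> \<le> c * \<bar>q - t\<bar>" by (rule lipF)
      also have "\<dots> = c * \<bar>t - q\<bar>" by (simp add: abs_minus_commute)
      also have "\<dots> \<le> \<bar>c\<bar> * \<bar>t - q\<bar>" by (intro mult_right_mono) auto
      finally show ?thesis .
    qed
    have 3: "B * \<bar>t - q\<bar> \<le> B * \<delta>" using tq B by simp
    have 4: "B * \<delta> = e / 2" unfolding \<delta>_def using B by simp
    have "\<bar>f m t - F t\<bar> \<le> \<bar>f m t - f m q\<bar> + \<bar>f m q - F q\<bar> + \<bar>F q - F t\<bar>" by linarith
    also have "\<dots> < e" using 1 2 3 4 elim(1) unfolding B_def by (simp add: dist_real_def algebra_simps)
    finally show ?case by (simp add: dist_real_def)
  qed
qed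

lemma sq_sandwich:
  fixes S :: "nat \<Rightarrow> real"
  assumes mono: "\<And>m. S m \<le> S (Suc m)" and nn: "\<And>m. 0 \<le> S m"
    and T: "(\<lambda>k. S ((k+1)^2) / real ((k+1)^2)) \<longlonglongrightarrow> \<mu>"
  shows "(\<lambda>m. S m / real m) \<longlonglongrightarrow> \<mu>"
proof -
  define U where "U k = S (k^2) / real (k^2)" for k
  have "(\<lambda>k. U (Suc k)) \<longlonglongrightarrow> \<mu>" using T unfolding U_def by simp
  then have U: "U \<longlonglongrightarrow> \<mu>" by (rule LIMSEQ_imp_Suc)
  have inc: "incseq S" using mono by (rule incseq_SucI)
  define k where "k m = nat \<lfloor>sqrt (real m)\<rfloor>" for m
  have kb: "(k m)^2 \<le> m \<and> m < (k m + 1)^2" for m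
  proof -
    have s0: "0 \<le> sqrt (real m)" by simp
    have k1: "real (k m) \<le> sqrt (real m)" unfolding k_def using s0 by linarith
    have k2: "sqrt (real m) < real (k m) + 1" unfolding k_def using s0 by linarith
    have "real (k m) ^ 2 \<le> sqrt (real m) ^ 2" using k1 by (intro power_mono) auto
    then have a: "real ((k m)^2) \<le> real m" by simp
    have "sqrt (real m) ^ 2 < (real (k m) + 1) ^ 2" using k2 s0 by (intro power_strict_mono) auto
    then have b: "real m < real ((k m + 1)^2)" by (simp only: of_nat_power of_nat_add of_nat_1 real_sqrt_pow2 of_nat_0_le_iff)
    from a b show ?thesis by (simp only: of_nat_le_iff of_nat_less_iff)
  qed
  have klim: "filterlim k at_top sequentially"
  proof (subst filterlim_at_top, intro allI)
    fix Z :: nat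
    show "\<forall>\<^sub>F m in sequentially. Z \<le> k m"
    proof (rule eventually_sequentiallyI[of "(Z+1)^2"])
      fix m assume "(Z+1)^2 \<le> m"
      with kb[of m] have "(Z+1)^2 < (k m + 1)^2" by linarith
      then have "Z + 1 < k m + 1" by (rule power_less_imp_less_base) simp
      then show "Z \<le> k m" by simp
    qed
  qed
  have r1: "(\<lambda>j. real j / real (Suc j)) \<longlonglongrightarrow> 1" by (rule LIMSEQ_n_over_Suc_n)
  have r2: "(\<lambda>j. real (Suc j) / real j) \<longlonglongrightarrow> 1" by (rule LIMSEQ_Suc_n_over_n)
  have low: "(\<lambda>j. U j * (real j / real (Suc j))^2) \<longlonglongrightarrow> \<mu> * 1^2"
    by (intro tendsto_intros U r1)
  have U': "(\<lambda>j. U (Suc j)) \<longlonglongrightarrow> \<mu>" using U by (rule LIMSEQ_Suc)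
  have up: "(\<lambda>j. U (Suc j) * (real (Suc j) / real j)^2) \<longlonglongrightarrow> \<mu> * 1^2"
    by (intro tendsto_intros U' r2)
  have low': "(\<lambda>m. U (k m) * (real (k m) / real (Suc (k m)))^2) \<longlonglongrightarrow> \<mu>"
    using filterlim_compose[OF low klim] by simp
  have up': "(\<lambda>m. U (Suc (k m)) * (real (Suc (k m)) / real (k m))^2) \<longlonglongrightarrow> \<mu>"
    using filterlim_compose[OF up klim] by simp
  show ?thesis
  proof (rule tendsto_sandwich[OF _ _ low' up'])
    show "\<forall>\<^sub>F m in sequentially. U (k m) * (real (k m) / real (Suc (k m)))\<^sup>2 \<le> S m / real m"
    proof (rule eventually_sequentiallyI[of 1])
      fix m :: nat assume m: "1 \<le> m"
      have a: "(k m)^2 \<le> m" "m < (Suc (k m))^2" using kb[of m] by auto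
      have k1: "k m \<ge> 1"
      proof (rule ccontr)
        assume "\<not> k m \<ge> 1" then have "k m = 0" by simp
        with a(2) m show False by simp
      qed
      have "S ((k m)^2) \<le> S m" using inc a(1) by (rule incseqD)
      have kpos: "0 < real (Suc (k m))" by simp
      have "U (k m) * (real (k m) / real (Suc (k m)))\<^sup>2 = S ((k m)^2) / real ((Suc (k m))^2)"
        unfolding U_def using k1 by (simp add: power_divide)
      also have "\<dots> \<le> S m / real ((Suc (k m))^2)"
        using \<open>S ((k m)^2) \<le> S m\<close> by (intro divide_right_mono) auto
      also have "\<dots> \<le> S m / real m"
      proof (rule divide_left_mono)
        show "real m \<le> real ((Suc (k m))^2)" by (metis a(2) less_imp_le of_nat_le_iff)
      qed (use m nn[of m] in auto)
      finally show "U (k m) * (real (k m) / real (Suc (k m)))\<^sup>2 \<le> S m / real m" .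
    qed
    show "\<forall>\<^sub>F m in sequentially. S m / real m \<le> U (Suc (k m)) * (real (Suc (k m)) / real (k m))\<^sup>2"
    proof (rule eventually_sequentiallyI[of 1])
      fix m :: nat assume m: "1 \<le> m"
      have a: "(k m)^2 \<le> m" "m < (Suc (k m))^2" using kb[of m] by auto
      have k1: "k m \<ge> 1"
      proof (rule ccontr)
        assume "\<not> k m \<ge> 1" then have "k m = 0" by simp
        with a(2) m show False by simp
      qed
      have "S m \<le> S ((Suc (k m))^2)" using a(2) by (intro incseqD[OF inc]) simp
      have "S m / real m \<le> S ((Suc (k m))^2) / real m"
        using \<open>S m \<le> S ((Suc (k m))^2)\<close> m by (intro divide_right_mono) auto
      also have "\<dots> \<le> S ((Suc (k m))^2) / real ((k m)^2)"
      proof (rule divide_left_mono)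
        show "real ((k m)^2) \<le> real m" by (metis a(1) of_nat_le_iff)
        show "0 \<le> S ((Suc (k m))^2)" by (rule nn)
        show "0 < real m * real ((k m)^2)" using k1 m by simp
      qed
      also have "\<dots> = U (Suc (k m)) * (real (Suc (k m)) / real (k m))\<^sup>2"
        unfolding U_def using k1 by (simp add: power_divide)
      finally show "S m / real m \<le> U (Suc (k m)) * (real (Suc (k m)) / real (k m))\<^sup>2" .
    qed
  qed
qed


lemma (in prob_space) slln_nonneg:
  fixes Y :: "nat \<Rightarrow> 'a \<Rightarrow> real"
  assumes meas[measurable]: "\<And>i. Y i \<in> borel_measurable M"
    and nn: "\<And>i x. 0 \<le> Y i x"
    and int2: "\<And>i j. integrable M (\<lambda>x. Y i x * Y j x)"
    and int1: "\<And>i. integrable M (Y i)"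
    and mean: "\<And>i. expectation (Y i) = \<mu>"
    and bnd: "\<And>i. expectation (\<lambda>x. Y i x * Y i x) \<le> C"
    and unc: "\<And>i j. i \<noteq> j \<Longrightarrow> expectation (\<lambda>x. Y i x * Y j x) = \<mu> * \<mu>"
  shows "AE x in M. (\<lambda>m. (\<Sum>i<m. Y i x) / real m) \<longlonglongrightarrow> \<mu>"
proof -
  define S where "S m x = (\<Sum>i<m. Y i x)" for m x
  have Smeas[measurable]: "S m \<in> borel_measurable M" for m unfolding S_def by measurable
  have intij: "integrable M (\<lambda>x. (Y i x - \<mu>) * (Y j x - \<mu>))" for i j
  proof -
    have "(\<lambda>x. (Y i x - \<mu>) * (Y j x - \<mu>)) = (\<lambda>x. Y i x * Y j x - \<mu> * Y j x - \<mu> * Y i x + \<mu> * \<mu>)"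
      by (auto simp: algebra_simps)
    then show ?thesis using int1 int2 by simp
  qed
  have Eij: "expectation (\<lambda>x. (Y i x - \<mu>) * (Y j x - \<mu>)) =
      (if i = j then expectation (\<lambda>x. Y i x * Y i x) - \<mu> * \<mu> else 0)" for i j
  proof -
    have "(\<lambda>x. (Y i x - \<mu>) * (Y j x - \<mu>)) = (\<lambda>x. Y i x * Y j x - \<mu> * Y j x - \<mu> * Y i x + \<mu> * \<mu>)"
      by (auto simp: algebra_simps)
    then have "expectation (\<lambda>x. (Y i x - \<mu>) * (Y j x - \<mu>)) = expectation (\<lambda>x. Y i x * Y j x) - \<mu> * \<mu>"
      using int1 int2 mean by (simp add: prob_space)
    then show ?thesis using unc[of i j] by auto
  qed
  have Sexp: "(S m x - real m * \<mu>)\<^sup>2 = (\<Sum>i<m. \<Sum>j<m. (Y i x - \<mu>) * (Y j x - \<mu>))" for m x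
  proof -
    have "S m x - real m * \<mu> = (\<Sum>i<m. Y i x - \<mu>)" by (simp add: S_def sum_subtractf)
    then show ?thesis by (simp add: power2_eq_square sum_product)
  qed
  have intS: "integrable M (\<lambda>x. (S m x - real m * \<mu>)\<^sup>2)" for m
    unfolding Sexp by (rule Bochner_Integration.integrable_sum, rule Bochner_Integration.integrable_sum, rule intij)
  have var: "expectation (\<lambda>x. (S m x - real m * \<mu>)\<^sup>2) \<le> real m * C" for m
  proof -
    have "expectation (\<lambda>x. (S m x - real m * \<mu>)\<^sup>2) =
        (\<Sum>i<m. \<Sum>j<m. expectation (\<lambda>x. (Y i x - \<mu>) * (Y j x - \<mu>)))"
      unfolding Sexp using intij by (simp add: Bochner_Integration.integral_sum Bochner_Integration.integrable_sum)
    also have "\<dots> = (\<Sum>i<m. expectation (\<lambda>x. Y i x * Y i x) - \<mu> * \<mu>)"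
      unfolding Eij by (simp add: if_distrib cong: if_cong)
    also have "\<dots> \<le> (\<Sum>i<m. C)"
      using bnd by (intro sum_mono) (smt (verit) zero_le_square)
    finally show ?thesis by simp
  qed
  have cheb: "prob {x\<in>space M. e \<le> \<bar>S m x / real m - \<mu>\<bar>} \<le> C / (real m * e\<^sup>2)"
    if m: "m > 0" and e: "e > 0" for m e
  proof -
    have "{x\<in>space M. e \<le> \<bar>S m x / real m - \<mu>\<bar>} = {x\<in>space M. (real m * e)\<^sup>2 \<le> (S m x - real m * \<mu>)\<^sup>2}"
    proof -
      have "e \<le> \<bar>S m x / real m - \<mu>\<bar> \<longleftrightarrow> (real m * e)\<^sup>2 \<le> (S m x - real m * \<mu>)\<^sup>2" for x
      proof -
        have "S m x / real m - \<mu> = (S m x - real m * \<mu>) / real m" using m by (simp add: field_simps)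
        then have "e \<le> \<bar>S m x / real m - \<mu>\<bar> \<longleftrightarrow> \<bar>real m * e\<bar> \<le> \<bar>S m x - real m * \<mu>\<bar>"
          using m e by (simp add: abs_divide pos_le_divide_eq mult.commute)
        also have "\<dots> \<longleftrightarrow> (real m * e)\<^sup>2 \<le> (S m x - real m * \<mu>)\<^sup>2" by (rule abs_le_square_iff)
        finally show ?thesis .
      qed
      then show ?thesis by auto
    qed
    also have "prob \<dots> \<le> expectation (\<lambda>x. (S m x - real m * \<mu>)\<^sup>2) / (real m * e)\<^sup>2"
      using m e by (intro integral_Markov_inequality_measure[OF intS, where A="space M"]) auto
    also have "\<dots> \<le> (real m * C) / (real m * e)\<^sup>2"
      using var m e by (intro divide_right_mono) auto
    also have "\<dots> = C / (real m * e\<^sup>2)" using m by (simp add: power2_eq_square)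
    finally show ?thesis .
  qed
  define T where "T k x = S ((k+1)^2) x / real ((k+1)^2)" for k x
  have Tmeas[measurable]: "T k \<in> borel_measurable M" for k unfolding T_def by measurable
  have BC: "AE x in M. \<forall>\<^sub>F k in sequentially. \<bar>T k x - \<mu>\<bar> < e" if e: "e > 0" for e
  proof -
    define A where "A k = {x\<in>space M. e \<le> \<bar>T k x - \<mu>\<bar>}" for k
    have Am[measurable]: "A k \<in> sets M" for k unfolding A_def by measurable
    have Ab: "measure M (A k) \<le> C / e\<^sup>2 * inverse (real (Suc k) ^ 2)" for k
    proof -
      have "measure M (A k) \<le> C / (real ((k+1)^2) * e\<^sup>2)"
        unfolding A_def T_def using e by (intro cheb) auto
      also have "\<dots> = C / e\<^sup>2 * inverse (real (Suc k) ^ 2)" by (simp add: field_simps)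
      finally show ?thesis .
    qed
    have "summable (\<lambda>k. inverse (real (Suc k) ^ 2))"
      using inverse_power_summable[of 2, where 'a=real] by (subst summable_Suc_iff) simp
    then have "summable (\<lambda>k. C / e\<^sup>2 * inverse (real (Suc k) ^ 2))" by (rule summable_mult)
    then have "summable (\<lambda>k. measure M (A k))"
      by (rule summable_comparison_test'[where N=0]) (use Ab in auto)
    then have "AE x in M. \<forall>\<^sub>F k in sequentially. x \<in> space M - A k"
      by (intro borel_cantelli_AE1) (auto simp: emeasure_eq_measure)
    then show ?thesis
      by (rule AE_mp) (auto intro!: AE_I2 elim!: eventually_mono simp: A_def)
  qed
  have "AE x in M. \<forall>j::nat. \<forall>\<^sub>F k in sequentially. \<bar>T k x - \<mu>\<bar> < inverse (real (Suc j))"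
    unfolding AE_all_countable by (intro allI BC) simp
  then have "AE x in M. (\<lambda>k. T k x) \<longlonglongrightarrow> \<mu>"
  proof (rule AE_mp, intro AE_I2 impI)
    fix x assume H: "\<forall>j::nat. \<forall>\<^sub>F k in sequentially. \<bar>T k x - \<mu>\<bar> < inverse (real (Suc j))"
    show "(\<lambda>k. T k x) \<longlonglongrightarrow> \<mu>"
    proof (rule tendstoI)
      fix e :: real assume "e > 0"
      then obtain j where j: "inverse (real (Suc j)) < e" using reals_Archimedean by blast
      show "\<forall>\<^sub>F k in sequentially. dist (T k x) \<mu> < e"
        using H[rule_format, of j] by eventually_elim (use j in \<open>simp add: dist_real_def\<close>)
    qed
  qed
  then show ?thesis
  proof (rule AE_mp, intro AE_I2 impI)
    fix x assume "(\<lambda>k. T k x) \<longlonglongrightarrow> \<mu>"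
    then have "(\<lambda>m. S m x / real m) \<longlonglongrightarrow> \<mu>"
      by (intro sq_sandwich) (auto simp: S_def T_def nn sum_nonneg)
    then show "(\<lambda>m. (\<Sum>i<m. Y i x) / real m) \<longlonglongrightarrow> \<mu>" by (simp add: S_def)
  qed
qed


lemma vec_meas:
  fixes f :: "'a \<Rightarrow> real^'d"
  assumes "\<And>k. (\<lambda>x. f x $ k) \<in> borel_measurable M"
  shows "f \<in> borel_measurable M"
  apply (subst borel_measurable_euclidean_space)
  using assms by (auto simp: Basis_vec_def inner_axis)

definition NN :: "real measure" where "NN = density lborel (\<lambda>t. ennreal (std_normal_density t))"

lemma NN_prob: "prob_space NN" unfolding NN_def by (rule prob_space_normal_density) simp

lemma sets_NN[simp, measurable_cong]: "sets NN = sets borel" unfolding NN_def by simp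

lemma meas_NN_iff: "measurable Q NN = measurable Q borel"
  by (rule measurable_cong_sets) simp_all

lemma sets_PiNN: "sets (PiM I (\<lambda>_. NN)) = sets (PiM I (\<lambda>_. borel))"
  by (rule sets_PiM_cong) simp_all

lemma V_meas: "(\<lambda>g. vec_lambda g) \<in> borel_measurable (PiM UNIV (\<lambda>_::'d::finite. NN))"
proof (rule vec_meas)
  fix k :: 'd
  have "(\<lambda>g. g k) \<in> PiM UNIV (\<lambda>_::'d. NN) \<rightarrow>\<^sub>M NN" by (rule measurable_component_singleton) simp
  then show "(\<lambda>g. vec_lambda g $ k) \<in> borel_measurable (PiM UNIV (\<lambda>_::'d. NN))"
    by (simp add: meas_NN_iff)
qed

locale gsetup = prob_space M for M :: "'w measure" +
  fixes n :: "nat \<Rightarrow> 'w \<Rightarrow> real ^ ('d::finite)"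
  assumes indep: "indep_vars (\<lambda>_. borel) (\<lambda>(i, k) \<omega>. n i \<omega> $ k) UNIV"
    and dist: "\<And>i k. distributed M lborel (\<lambda>\<omega>. n i \<omega> $ k) (\<lambda>t. ennreal (std_normal_density t))"
begin

lemma coord_meas[measurable]: "(\<lambda>\<omega>. n i \<omega> $ k) \<in> borel_measurable M"
  using distributed_measurable[OF dist[of i k]] by simp

lemma n_meas[measurable]: "n i \<in> borel_measurable M"
  by (rule vec_meas) simp

lemma coord_distr: "distr M borel (\<lambda>\<omega>. n i \<omega> $ k) = NN"
proof -
  have "distr M lborel (\<lambda>\<omega>. n i \<omega> $ k) = NN" unfolding NN_def by (rule distributed_distr_eq_density[OF dist])
  moreover have "distr M borel (\<lambda>\<omega>. n i \<omega> $ k) = distr M lborel (\<lambda>\<omega>. n i \<omega> $ k)" by (rule distr_cong) auto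
  ultimately show ?thesis by simp
qed

definition Om :: "'w \<Rightarrow> (nat \<times> 'd) \<Rightarrow> real" where "Om \<omega> = (\<lambda>p. n (fst p) \<omega> $ snd p)"

lemma Om_meas: "Om \<in> M \<rightarrow>\<^sub>M PiM UNIV (\<lambda>_. borel)"
proof -
  have "Om = (\<lambda>\<omega>. \<lambda>p\<in>UNIV. n (fst p) \<omega> $ snd p)" by (simp add: Om_def fun_eq_iff)
  moreover have "(\<lambda>\<omega>. \<lambda>p\<in>UNIV. n (fst p) \<omega> $ snd p) \<in> M \<rightarrow>\<^sub>M PiM UNIV (\<lambda>_. borel)"
    by (rule measurable_restrict) (rule coord_meas)
  ultimately show ?thesis by simp
qed

lemma Om_distr: "distr M (PiM UNIV (\<lambda>_. borel)) Om = PiM UNIV (\<lambda>_. NN)"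
proof -
  have rv: "random_variable borel ((\<lambda>(i, k) \<omega>. n i \<omega> $ k) p)" for p :: "nat \<times> 'd"
    by (cases p) simp
  have "distr M (\<Pi>\<^sub>M p\<in>UNIV. borel) (\<lambda>x. \<lambda>p\<in>UNIV. (\<lambda>(i, k) \<omega>. n i \<omega> $ k) p x) =
      (\<Pi>\<^sub>M p\<in>UNIV. distr M borel ((\<lambda>(i, k) \<omega>. n i \<omega> $ k) p))"
    using indep_vars_iff_distr_eq_PiM[where I=UNIV and X="\<lambda>(i, k) \<omega>. n i \<omega> $ k" and M'="\<lambda>_. borel", OF UNIV_not_empty rv] indep
    by (rule iffD1)
  moreover have "(\<lambda>x. \<lambda>p\<in>UNIV. (\<lambda>(i, k) \<omega>. n i \<omega> $ k) p x) = Om"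
    by (auto simp: Om_def fun_eq_iff split: prod.split)
  moreover have "(\<Pi>\<^sub>M p\<in>UNIV. distr M borel ((\<lambda>(i, k) \<omega>. n i \<omega> $ k) p)) = PiM UNIV (\<lambda>_. NN)"
    by (rule PiM_cong) (auto split: prod.split simp: coord_distr)
  ultimately show ?thesis by simp
qed

lemma R_meas: "(\<lambda>W. \<lambda>k\<in>UNIV. W (i, k)) \<in> PiM UNIV (\<lambda>_::nat\<times>'d. NN) \<rightarrow>\<^sub>M PiM UNIV (\<lambda>_::'d. NN)"
  by (intro measurable_restrict measurable_component_singleton) simp

lemma n_distr: "distr M borel (n i) = distr (PiM UNIV (\<lambda>_::'d. NN)) borel vec_lambda"
proof -
  define R :: "(nat \<times> 'd \<Rightarrow> real) \<Rightarrow> 'd \<Rightarrow> real" where "R = (\<lambda>W. \<lambda>k\<in>UNIV. W (i, k))"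
  have R: "R \<in> PiM UNIV (\<lambda>_::nat\<times>'d. NN) \<rightarrow>\<^sub>M PiM UNIV (\<lambda>_::'d. NN)" unfolding R_def by (rule R_meas)
  have VR: "vec_lambda \<circ> R \<in> PiM UNIV (\<lambda>_::nat\<times>'d. NN) \<rightarrow>\<^sub>M borel"
    using V_meas R by (rule measurable_comp[rotated])
  then have VR': "vec_lambda \<circ> R \<in> PiM UNIV (\<lambda>_::nat\<times>'d. borel) \<rightarrow>\<^sub>M borel"
    by (simp add: measurable_cong_sets[OF sets_PiNN refl])
  have ni: "n i = (vec_lambda \<circ> R) \<circ> Om" by (simp add: fun_eq_iff R_def Om_def vec_eq_iff)
  have "distr M borel (n i) = distr (distr M (PiM UNIV (\<lambda>_. borel)) Om) borel (vec_lambda \<circ> R)"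
    unfolding ni by (rule distr_distr[OF VR' Om_meas, symmetric])
  also have "\<dots> = distr (PiM UNIV (\<lambda>_. NN)) borel (vec_lambda \<circ> R)" unfolding Om_distr ..
  also have "\<dots> = distr (distr (PiM UNIV (\<lambda>_. NN)) (PiM UNIV (\<lambda>_::'d. NN)) R) borel vec_lambda"
    by (rule distr_distr[OF V_meas R, symmetric])
  also have "distr (PiM UNIV (\<lambda>_. NN)) (PiM UNIV (\<lambda>_::'d. NN)) R = PiM UNIV (\<lambda>_::'d. NN)"
    unfolding R_def using distr_PiM_reindex[where M="\<lambda>_. NN" and K=UNIV and I=UNIV and f="Pair i"] NN_prob
    by (simp add: inj_on_def)
  finally show ?thesis .
qed

lemma n_distr0: "distr M borel (n i) = distr M borel (n 0)"
  by (simp add: n_distr)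

lemma indep_n: assumes "i \<noteq> j" shows "indep_var borel (n i) borel (n j)"
proof -
  define A where "A = {i} \<times> (UNIV :: 'd set)"
  define B where "B = {j} \<times> (UNIV :: 'd set)"
  have AB: "A \<inter> B = {}" using assms by (auto simp: A_def B_def)
  have ind: "indep_var (PiM A (\<lambda>_. borel)) (\<lambda>\<omega>. restrict (\<lambda>p. (\<lambda>(i, k) \<omega>. n i \<omega> $ k) p \<omega>) A)
                       (PiM B (\<lambda>_. borel)) (\<lambda>\<omega>. restrict (\<lambda>p. (\<lambda>(i, k) \<omega>. n i \<omega> $ k) p \<omega>) B)"
    by (rule indep_var_restrict[OF indep AB]) simp_all
  define WA where "WA = (\<lambda>g::nat\<times>'d \<Rightarrow> real. vec_lambda (\<lambda>k. g (i, k)))"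
  define WB where "WB = (\<lambda>g::nat\<times>'d \<Rightarrow> real. vec_lambda (\<lambda>k. g (j, k)))"
  have cA: "(\<lambda>g. g (i, k)) \<in> borel_measurable (PiM A (\<lambda>_. borel))" for k
    by (rule measurable_component_singleton) (simp add: A_def)
  have cB: "(\<lambda>g. g (j, k)) \<in> borel_measurable (PiM B (\<lambda>_. borel))" for k
    by (rule measurable_component_singleton) (simp add: B_def)
  have WA: "WA \<in> borel_measurable (PiM A (\<lambda>_. borel))"
    unfolding WA_def by (rule vec_meas) (simp only: vec_lambda_beta cA)
  have WB: "WB \<in> borel_measurable (PiM B (\<lambda>_. borel))"
    unfolding WB_def by (rule vec_meas) (simp only: vec_lambda_beta cB)
  have "indep_var borel (WA \<circ> (\<lambda>\<omega>. restrict (\<lambda>p. (\<lambda>(i, k) \<omega>. n i \<omega> $ k) p \<omega>) A))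
                   borel (WB \<circ> (\<lambda>\<omega>. restrict (\<lambda>p. (\<lambda>(i, k) \<omega>. n i \<omega> $ k) p \<omega>) B))"
    by (rule indep_var_compose[OF ind WA WB])
  moreover have "WA \<circ> (\<lambda>\<omega>. restrict (\<lambda>p. (\<lambda>(i, k) \<omega>. n i \<omega> $ k) p \<omega>) A) = n i"
    by (simp add: fun_eq_iff WA_def A_def vec_eq_iff)
  moreover have "WB \<circ> (\<lambda>\<omega>. restrict (\<lambda>p. (\<lambda>(i, k) \<omega>. n i \<omega> $ k) p \<omega>) B) = n j"
    by (simp add: fun_eq_iff WB_def B_def vec_eq_iff)
  ultimately show ?thesis by simp
qed

end


context gsetup
begin

lemma integrable_n_iff:
  fixes h :: "real^'d \<Rightarrow> real"
  assumes [measurable]: "h \<in> borel_measurable borel"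
  shows "integrable M (\<lambda>\<omega>. h (n i \<omega>)) \<longleftrightarrow> integrable M (\<lambda>\<omega>. h (n 0 \<omega>))"
proof -
  have "integrable M (\<lambda>\<omega>. h (n i \<omega>)) \<longleftrightarrow> integrable (distr M borel (n i)) h"
    by (rule integrable_distr_eq[symmetric]) simp_all
  also have "\<dots> \<longleftrightarrow> integrable (distr M borel (n 0)) h" by (simp only: n_distr0[of i])
  also have "\<dots> \<longleftrightarrow> integrable M (\<lambda>\<omega>. h (n 0 \<omega>))"
    by (rule integrable_distr_eq) simp_all
  finally show ?thesis .
qed

lemma integral_n_eq:
  fixes h :: "real^'d \<Rightarrow> real"
  assumes [measurable]: "h \<in> borel_measurable borel"
  shows "expectation (\<lambda>\<omega>. h (n i \<omega>)) = expectation (\<lambda>\<omega>. h (n 0 \<omega>))"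
proof -
  have "expectation (\<lambda>\<omega>. h (n i \<omega>)) = integral\<^sup>L (distr M borel (n i)) h"
    by (rule integral_distr[symmetric]) simp_all
  also have "\<dots> = integral\<^sup>L (distr M borel (n 0)) h" by (simp only: n_distr0[of i])
  also have "\<dots> = expectation (\<lambda>\<omega>. h (n 0 \<omega>))"
    by (rule integral_distr) simp_all
  finally show ?thesis .
qed

lemma slln_nn:
  fixes g :: "real^'d \<Rightarrow> real"
  assumes g[measurable]: "g \<in> borel_measurable borel" and nn: "\<And>v. 0 \<le> g v"
    and sq: "integrable M (\<lambda>\<omega>. (g (n 0 \<omega>))\<^sup>2)"
  shows "AE \<omega> in M. (\<lambda>m. (\<Sum>i<m. g (n i \<omega>)) / real m) \<longlonglongrightarrow> expectation (\<lambda>\<omega>. g (n 0 \<omega>))"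
proof -
  have gg[measurable]: "(\<lambda>v. g v * g v) \<in> borel_measurable borel" by measurable
  have sq0: "integrable M (\<lambda>\<omega>. g (n 0 \<omega>) * g (n 0 \<omega>))" using sq by (simp add: power2_eq_square)
  have sqi: "integrable M (\<lambda>\<omega>. g (n i \<omega>) * g (n i \<omega>))" for i
    using integrable_n_iff[OF gg, of i] sq0 by simp
  have int0: "integrable M (\<lambda>\<omega>. g (n 0 \<omega>))"
    by (rule square_integrable_imp_integrable) (simp_all add: sq)
  have int1: "integrable M (\<lambda>\<omega>. g (n i \<omega>))" for i
    using integrable_n_iff[OF g, of i] int0 by simp
  have ind: "indep_var borel (\<lambda>\<omega>. g (n i \<omega>)) borel (\<lambda>\<omega>. g (n j \<omega>))" if "i \<noteq> j" for i j
    using indep_var_compose[OF indep_n[OF that] g g] by (simp add: comp_def)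
  show ?thesis
  proof (rule slln_nonneg[where C="expectation (\<lambda>\<omega>. g (n 0 \<omega>) * g (n 0 \<omega>))"])
    show "integrable M (\<lambda>\<omega>. g (n i \<omega>) * g (n j \<omega>))" for i j
    proof (cases "i = j")
      case True then show ?thesis using sqi by simp
    next
      case False then show ?thesis using ind[OF False] int1 by (intro indep_var_integrable) auto
    qed
    show "expectation (\<lambda>\<omega>. g (n i \<omega>)) = expectation (\<lambda>\<omega>. g (n 0 \<omega>))" for i
      by (rule integral_n_eq[OF g])
    show "expectation (\<lambda>\<omega>. g (n i \<omega>) * g (n i \<omega>)) \<le> expectation (\<lambda>\<omega>. g (n 0 \<omega>) * g (n 0 \<omega>))" for i
      using integral_n_eq[OF gg, of i] by simp
    show "expectation (\<lambda>\<omega>. g (n i \<omega>) * g (n j \<omega>)) = expectation (\<lambda>\<omega>. g (n 0 \<omega>)) * expectation (\<lambda>\<omega>. g (n 0 \<omega>))"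
      if "i \<noteq> j" for i j
      using indep_var_lebesgue_integral[OF ind[OF that] int1 int1] integral_n_eq[OF g, of i] integral_n_eq[OF g, of j]
      by simp
  qed (simp_all add: nn int1)
qed

lemma slln_h:
  fixes h :: "real^'d \<Rightarrow> real"
  assumes h[measurable]: "h \<in> borel_measurable borel"
    and sq: "integrable M (\<lambda>\<omega>. (h (n 0 \<omega>))\<^sup>2)"
  shows "AE \<omega> in M. (\<lambda>m. (\<Sum>i<m. h (n i \<omega>)) / real m) \<longlonglongrightarrow> expectation (\<lambda>\<omega>. h (n 0 \<omega>))"
proof -
  define hp where "hp v = max (h v) 0" for v
  define hm where "hm v = max (- h v) 0" for v
  have [measurable]: "hp \<in> borel_measurable borel" "hm \<in> borel_measurable borel"
    unfolding hp_def hm_def by measurable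
  have sqp: "integrable M (\<lambda>\<omega>. (hp (n 0 \<omega>))\<^sup>2)"
    by (rule Bochner_Integration.integrable_bound[OF sq]) (auto simp: hp_def max_def)
  have sqm: "integrable M (\<lambda>\<omega>. (hm (n 0 \<omega>))\<^sup>2)"
    by (rule Bochner_Integration.integrable_bound[OF sq]) (auto simp: hm_def max_def)
  have ip: "integrable M (\<lambda>\<omega>. hp (n 0 \<omega>))"
    by (rule square_integrable_imp_integrable) (simp_all add: sqp)
  have im: "integrable M (\<lambda>\<omega>. hm (n 0 \<omega>))"
    by (rule square_integrable_imp_integrable) (simp_all add: sqm)
  have hpm: "h v = hp v - hm v" for v by (simp add: hp_def hm_def max_def)
  have Ap: "AE \<omega> in M. (\<lambda>m. (\<Sum>i<m. hp (n i \<omega>)) / real m) \<longlonglongrightarrow> expectation (\<lambda>\<omega>. hp (n 0 \<omega>))"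
    by (rule slln_nn[OF _ _ sqp]) (simp_all add: hp_def)
  have Am: "AE \<omega> in M. (\<lambda>m. (\<Sum>i<m. hm (n i \<omega>)) / real m) \<longlonglongrightarrow> expectation (\<lambda>\<omega>. hm (n 0 \<omega>))"
    by (rule slln_nn[OF _ _ sqm]) (simp_all add: hm_def)
  have E: "expectation (\<lambda>\<omega>. h (n 0 \<omega>)) = expectation (\<lambda>\<omega>. hp (n 0 \<omega>)) - expectation (\<lambda>\<omega>. hm (n 0 \<omega>))"
    unfolding hpm by (rule Bochner_Integration.integral_diff[OF ip im])
  show ?thesis using Ap Am
  proof eventually_elim
    case (elim \<omega>)
    have "(\<lambda>m. (\<Sum>i<m. hp (n i \<omega>)) / real m - (\<Sum>i<m. hm (n i \<omega>)) / real m) \<longlonglongrightarrow>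
        expectation (\<lambda>\<omega>. hp (n 0 \<omega>)) - expectation (\<lambda>\<omega>. hm (n 0 \<omega>))"
      using elim by (rule tendsto_diff)
    moreover have "(\<Sum>i<m. hp (n i \<omega>)) / real m - (\<Sum>i<m. hm (n i \<omega>)) / real m = (\<Sum>i<m. h (n i \<omega>)) / real m" for m
      unfolding hpm by (simp add: sum_subtractf diff_divide_distrib)
    ultimately show ?case unfolding E by simp
  qed
qed

lemma coord_int: "integrable M (\<lambda>\<omega>. (n i \<omega> $ k) ^ p)"
proof -
  have "integrable lborel (\<lambda>x. std_normal_density x * x ^ p)" by (rule integrable_std_normal_moment)
  then show ?thesis
    using distributed_integrable[OF dist[of i k], of "\<lambda>x. x ^ p"] by simp
qed

lemma coord_int1: "integrable M (\<lambda>\<omega>. n i \<omega> $ k)"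
  using coord_int[of i k 1] by simp

lemma coord_mean: "expectation (\<lambda>\<omega>. n i \<omega> $ k) = 0"
  by (rule standard_normal_distributed_expectation[OF dist])

lemma coord_sq: "expectation (\<lambda>\<omega>. n i \<omega> $ k * n i \<omega> $ k) = 1"
  using standard_normal_distributed_variance[OF dist[of i k]] coord_mean[of i k]
  by (simp add: power2_eq_square)

lemma coord_indep:
  assumes "j \<noteq> k"
  shows "indep_var borel (\<lambda>\<omega>. n i \<omega> $ j) borel (\<lambda>\<omega>. n i \<omega> $ k)"
proof -
  have AB: "{(i, j)} \<inter> {(i, k)} = {}" using assms by auto
  have ind: "indep_var (PiM {(i,j)} (\<lambda>_. borel)) (\<lambda>\<omega>. restrict (\<lambda>p. (\<lambda>(i, k) \<omega>. n i \<omega> $ k) p \<omega>) {(i,j)})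
                       (PiM {(i,k)} (\<lambda>_. borel)) (\<lambda>\<omega>. restrict (\<lambda>p. (\<lambda>(i, k) \<omega>. n i \<omega> $ k) p \<omega>) {(i,k)})"
    by (rule indep_var_restrict[OF indep AB]) simp_all
  have cA: "(\<lambda>g. g (i, j)) \<in> borel_measurable (PiM {(i,j)} (\<lambda>_. borel))"
    by (rule measurable_component_singleton) simp
  have cB: "(\<lambda>g. g (i, k)) \<in> borel_measurable (PiM {(i,k)} (\<lambda>_. borel))"
    by (rule measurable_component_singleton) simp
  show ?thesis
    using indep_var_compose[OF ind cA cB] by (simp add: comp_def)
qed

lemma coord_cross:
  assumes "j \<noteq> k"
  shows "expectation (\<lambda>\<omega>. n i \<omega> $ j * n i \<omega> $ k) = 0"
  using indep_var_lebesgue_integral[OF coord_indep[OF assms] coord_int1 coord_int1]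
  by (simp add: coord_mean)

lemma coord_cross_int: "integrable M (\<lambda>\<omega>. n i \<omega> $ j * n i \<omega> $ k)"
proof (cases "j = k")
  case True then show ?thesis using coord_int[of i k 2] by (simp add: power2_eq_square)
next
  case False then show ?thesis
    using indep_var_integrable[OF coord_indep[OF False] coord_int1 coord_int1] by simp
qed

lemma inner_moment: "expectation (\<lambda>\<omega>. (n i \<omega> \<bullet> y) * n i \<omega> $ k) = y $ k"
proof -
  have "(\<lambda>\<omega>. (n i \<omega> \<bullet> y) * n i \<omega> $ k) = (\<lambda>\<omega>. \<Sum>j\<in>UNIV. y $ j * (n i \<omega> $ j * n i \<omega> $ k))"
    by (simp add: inner_vec_def sum_distrib_left sum_distrib_right mult_ac)
  then have "expectation (\<lambda>\<omega>. (n i \<omega> \<bullet> y) * n i \<omega> $ k) = (\<Sum>j\<in>UNIV. y $ j * expectation (\<lambda>\<omega>. n i \<omega> $ j * n i \<omega> $ k))"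
    by (simp add: Bochner_Integration.integral_sum coord_cross_int)
  also have "\<dots> = (\<Sum>j\<in>UNIV. if j = k then y $ k else 0)"
    by (rule sum.cong) (auto simp: coord_sq coord_cross)
  finally show ?thesis by simp
qed

end


lemma NN_single: "emeasure NN {c} = 0"
proof -
  have "AE x in lborel. x \<in> {c} \<longrightarrow> ennreal (std_normal_density x) = 0"
    using AE_lborel_singleton[of c] by eventually_elim simp
  then have "{c} \<in> null_sets NN" unfolding NN_def
    by (subst null_sets_density_iff) auto
  then show ?thesis by (rule null_setsD1)
qed

context gsetup
begin

lemma no_tie:
  assumes "v \<noteq> 0"
  shows "AE \<omega> in M. n i \<omega> \<bullet> v \<noteq> 0"
proof -
  obtain k where vk: "v $ k \<noteq> 0" using assms by (auto simp: vec_eq_iff)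
  define X where "X \<omega> = n i \<omega> $ k" for \<omega>
  define Y where "Y \<omega> = (\<Sum>j\<in>UNIV-{k}. n i \<omega> $ j * v $ j)" for \<omega>
  have inner: "n i \<omega> \<bullet> v = X \<omega> * v $ k + Y \<omega>" for \<omega>
  proof -
    have "(\<Sum>j\<in>UNIV. n i \<omega> $ j * v $ j) = n i \<omega> $ k * v $ k + (\<Sum>j\<in>UNIV-{k}. n i \<omega> $ j * v $ j)"
      by (rule sum.remove) auto
    then show ?thesis unfolding X_def Y_def inner_vec_def by simp
  qed
  define A where "A = {(i, k)}"
  define B where "B = {i} \<times> (UNIV - {k})"
  have AB: "A \<inter> B = {}" by (auto simp: A_def B_def)
  have ind: "indep_var (PiM A (\<lambda>_. borel)) (\<lambda>\<omega>. restrict (\<lambda>p. (\<lambda>(i, k) \<omega>. n i \<omega> $ k) p \<omega>) A)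
                       (PiM B (\<lambda>_. borel)) (\<lambda>\<omega>. restrict (\<lambda>p. (\<lambda>(i, k) \<omega>. n i \<omega> $ k) p \<omega>) B)"
    by (rule indep_var_restrict[OF indep AB]) simp_all
  have cA: "(\<lambda>g. g (i, k)) \<in> borel_measurable (PiM A (\<lambda>_. borel))"
    by (rule measurable_component_singleton) (simp add: A_def)
  have cB: "(\<lambda>g. \<Sum>j\<in>UNIV-{k}. g (i, j) * v $ j) \<in> borel_measurable (PiM B (\<lambda>_. borel))"
  proof (rule borel_measurable_sum)
    fix j assume "j \<in> UNIV - {k}"
    then have "(\<lambda>g. g (i, j)) \<in> borel_measurable (PiM B (\<lambda>_. borel))"
      by (intro measurable_component_singleton) (simp add: B_def)
    then show "(\<lambda>g. g (i, j) * v $ j) \<in> borel_measurable (PiM B (\<lambda>_. borel))"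
      by (rule borel_measurable_times) simp
  qed
  have XY: "indep_var borel X borel Y"
  proof -
    have "indep_var borel ((\<lambda>g. g (i, k)) \<circ> (\<lambda>\<omega>. restrict (\<lambda>p. (\<lambda>(i, k) \<omega>. n i \<omega> $ k) p \<omega>) A))
       borel ((\<lambda>g. \<Sum>j\<in>UNIV-{k}. g (i, j) * v $ j) \<circ> (\<lambda>\<omega>. restrict (\<lambda>p. (\<lambda>(i, k) \<omega>. n i \<omega> $ k) p \<omega>) B))"
      by (rule indep_var_compose[OF ind cA cB])
    moreover have "((\<lambda>g. g (i, k)) \<circ> (\<lambda>\<omega>. restrict (\<lambda>p. (\<lambda>(i, k) \<omega>. n i \<omega> $ k) p \<omega>) A)) = X"
      by (simp add: fun_eq_iff X_def A_def)
    moreover have "((\<lambda>g. \<Sum>j\<in>UNIV-{k}. g (i, j) * v $ j) \<circ> (\<lambda>\<omega>. restrict (\<lambda>p. (\<lambda>(i, k) \<omega>. n i \<omega> $ k) p \<omega>) B)) = Y"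
      by (auto simp: fun_eq_iff Y_def B_def intro!: sum.cong)
    ultimately show ?thesis by simp
  qed
  have Xm[measurable]: "X \<in> borel_measurable M" unfolding X_def by simp
  have Ym[measurable]: "Y \<in> borel_measurable M" unfolding Y_def by measurable
  have D: "distr M borel X \<Otimes>\<^sub>M distr M borel Y = distr M (borel \<Otimes>\<^sub>M borel) (\<lambda>\<omega>. (X \<omega>, Y \<omega>))"
    using XY indep_var_distribution_eq by blast
  have DX: "distr M borel X = NN" unfolding X_def by (rule coord_distr)
  define Z where "Z = {p \<in> space (borel \<Otimes>\<^sub>M borel). fst p * v $ k + snd p = (0::real)}"
  have Zs[measurable]: "Z \<in> sets (borel \<Otimes>\<^sub>M borel)" unfolding Z_def by measurable
  interpret DXp: prob_space "distr M borel X" by (rule prob_space_distr) simp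
  interpret DYp: prob_space "distr M borel Y" by (rule prob_space_distr) simp
  interpret PXY: pair_sigma_finite "distr M borel X" "distr M borel Y" ..
  have Zs': "Z \<in> sets (distr M borel X \<Otimes>\<^sub>M distr M borel Y)"
    using Zs by (simp add: sets_pair_measure_cong[of "distr M borel X" borel "distr M borel Y" borel])
  have "emeasure (distr M borel X \<Otimes>\<^sub>M distr M borel Y) Z =
      (\<integral>\<^sup>+y. emeasure (distr M borel X) ((\<lambda>x. (x, y)) -` Z) \<partial>distr M borel Y)"
    by (rule PXY.emeasure_pair_measure_alt2[OF Zs'])
  also have "\<dots> = (\<integral>\<^sup>+y. 0 \<partial>distr M borel Y)"
  proof (rule nn_integral_cong)
    fix y
    have "(\<lambda>x. (x, y)) -` Z = {- y / v $ k}" using vk by (auto simp: Z_def field_simps space_pair_measure)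
    then show "emeasure (distr M borel X) ((\<lambda>x. (x, y)) -` Z) = 0" by (simp add: DX NN_single)
  qed
  finally have Z0: "emeasure (distr M (borel \<Otimes>\<^sub>M borel) (\<lambda>\<omega>. (X \<omega>, Y \<omega>))) Z = 0" by (simp add: D)
  have "emeasure (distr M (borel \<Otimes>\<^sub>M borel) (\<lambda>\<omega>. (X \<omega>, Y \<omega>))) Z =
        emeasure M ((\<lambda>\<omega>. (X \<omega>, Y \<omega>)) -` Z \<inter> space M)"
    by (rule emeasure_distr) simp_all
  also have "(\<lambda>\<omega>. (X \<omega>, Y \<omega>)) -` Z \<inter> space M = {\<omega>\<in>space M. n i \<omega> \<bullet> v = 0}"
    by (auto simp: Z_def inner space_pair_measure)
  finally have E0: "emeasure M {\<omega>\<in>space M. n i \<omega> \<bullet> v = 0} = 0" using Z0 by simp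
  show ?thesis
    by (subst AE_iff_measurable[where N="{\<omega>\<in>space M. n i \<omega> \<bullet> v = 0}"]) (auto simp: E0)
qed

end


lemma part1_det:
  fixes ns :: "nat \<Rightarrow> 'v::real_inner"
  assumes l: "l < L"
    and nt: "\<And>i r. r < L \<Longrightarrow> r \<noteq> l \<Longrightarrow> ns i \<bullet> x r \<noteq> ns i \<bullet> x l"
    and ne: "hard_set L x ns m l \<noteq> {}"
  shows "((\<lambda>\<beta>. xhat L x ns m \<beta> l) \<longlongrightarrow> hard_est L x ns m l) at_top"
proof -
  define H where "H = hard_set L x ns m l"
  have Hsub: "H \<subseteq> {..<m}" by (auto simp: H_def hard_set_def)
  have Hfin: "finite H" using Hsub finite_subset by blast
  have Hne: "H \<noteq> {}" using ne by (simp add: H_def)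
  have lim: "((\<lambda>\<beta>. softp L x (ns i) \<beta> l) \<longlongrightarrow> (if i \<in> H then 1 else 0)) at_top" if i: "i < m" for i
  proof (cases "i \<in> H")
    case True
    then have "\<And>r. r < L \<Longrightarrow> r \<noteq> l \<Longrightarrow> ns i \<bullet> x r < ns i \<bullet> x l" by (auto simp: H_def hard_set_def)
    then have "((\<lambda>\<beta>. softp L x (ns i) \<beta> l) \<longlongrightarrow> 1) at_top" by (rule softp_top1[OF l])
    then show ?thesis using True by simp
  next
    case False
    then obtain r where r: "r < L" "r \<noteq> l" "\<not> ns i \<bullet> x r < ns i \<bullet> x l" using i by (auto simp: H_def hard_set_def)
    then have "ns i \<bullet> x l < ns i \<bullet> x r" using nt[OF r(1,2), of i] by linarith
    then have "((\<lambda>\<beta>. softp L x (ns i) \<beta> l) \<longlongrightarrow> 0) at_top" by (rule softp_top0[OF l r(1)])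
    then show ?thesis using False by simp
  qed
  have S1: "((\<lambda>\<beta>. \<Sum>i<m. softp L x (ns i) \<beta> l) \<longlongrightarrow> (\<Sum>i<m. if i \<in> H then 1 else 0)) at_top"
    by (rule tendsto_sum) (use lim in auto)
  have S2: "((\<lambda>\<beta>. \<Sum>i<m. softp L x (ns i) \<beta> l *\<^sub>R ns i) \<longlongrightarrow> (\<Sum>i<m. (if i \<in> H then 1 else 0) *\<^sub>R ns i)) at_top"
    by (rule tendsto_sum, rule tendsto_scaleR) (use lim in auto)
  have c1: "(\<Sum>i<m. if i \<in> H then 1 else 0) = real (card H)"
  proof -
    have "(\<Sum>i<m. if i \<in> H then 1 else (0::real)) = (\<Sum>i\<in>{..<m} \<inter> H. 1)"
      by (rule sum.inter_restrict[symmetric]) simp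
    also have "{..<m} \<inter> H = H" using Hsub by blast
    finally show ?thesis by simp
  qed
  have c2: "(\<Sum>i<m. (if i \<in> H then 1 else 0) *\<^sub>R ns i) = (\<Sum>i\<in>H. ns i)"
  proof -
    have "(\<Sum>i<m. (if i \<in> H then 1 else 0) *\<^sub>R ns i) = (\<Sum>i<m. if i \<in> H then ns i else 0)"
      by (rule sum.cong) auto
    also have "\<dots> = (\<Sum>i\<in>{..<m} \<inter> H. ns i)"
      by (rule sum.inter_restrict[symmetric]) simp
    also have "{..<m} \<inter> H = H" using Hsub by blast
    finally show ?thesis .
  qed
  have cne: "real (card H) \<noteq> 0" using Hfin Hne by simp
  have "((\<lambda>\<beta>. inverse (\<Sum>i<m. softp L x (ns i) \<beta> l) *\<^sub>R (\<Sum>i<m. softp L x (ns i) \<beta> l *\<^sub>R ns i))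
      \<longlongrightarrow> inverse (real (card H)) *\<^sub>R (\<Sum>i\<in>H. ns i)) at_top"
    using S1 S2 unfolding c1 c2 by (intro tendsto_scaleR tendsto_inverse cne)
  then show ?thesis unfolding xhat_def hard_est_def H_def by (simp add: divide_inverse)
qed

context gsetup
begin

lemma part1:
  assumes l: "l < L"
    and dx: "\<And>r s. r < L \<Longrightarrow> s < L \<Longrightarrow> r \<noteq> s \<Longrightarrow> x r \<noteq> x s"
  shows "AE \<omega> in M. hard_set L x (\<lambda>i. n i \<omega>) m l \<noteq> {} \<longrightarrow>
            ((\<lambda>\<beta>. xhat L x (\<lambda>i. n i \<omega>) m \<beta> l) \<longlongrightarrow> hard_est L x (\<lambda>i. n i \<omega>) m l) at_top"
proof -
  have "AE \<omega> in M. \<forall>i. \<forall>r. r < L \<and> r \<noteq> l \<longrightarrow> n i \<omega> \<bullet> (x r - x l) \<noteq> 0"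
    unfolding AE_all_countable
  proof (intro allI)
    fix i r
    show "AE \<omega> in M. r < L \<and> r \<noteq> l \<longrightarrow> n i \<omega> \<bullet> (x r - x l) \<noteq> 0"
    proof (cases "r < L \<and> r \<noteq> l")
      case True
      then have "x r - x l \<noteq> 0" using dx[of r l] l by auto
      then show ?thesis using no_tie by simp
    qed simp
  qed
  then show ?thesis
  proof eventually_elim
    case (elim \<omega>)
    show ?case
    proof
      assume "hard_set L x (\<lambda>i. n i \<omega>) m l \<noteq> {}"
      moreover have "\<And>i r. r < L \<Longrightarrow> r \<noteq> l \<Longrightarrow> n i \<omega> \<bullet> x r \<noteq> n i \<omega> \<bullet> x l"
        using elim by (auto simp: inner_diff_right)
      ultimately show "((\<lambda>\<beta>. xhat L x (\<lambda>i. n i \<omega>) m \<beta> l) \<longlongrightarrow> hard_est L x (\<lambda>i. n i \<omega>) m l) at_top"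
        by (intro part1_det[OF l])
    qed
  qed
qed

end


definition wf :: "real^'d \<Rightarrow> real" where "wf v = 1 + (\<Sum>j\<in>UNIV. (v $ j)^2)"

lemma norm_sq_vec: "(norm (v::real^'d))^2 = (\<Sum>j\<in>UNIV. (v $ j)^2)"
  unfolding power2_norm_eq_inner inner_vec_def by (simp add: power2_eq_square)

lemma le_one_plus_sq: "(t::real) \<le> 1 + t^2"
proof -
  have h: "0 \<le> (t - 1/2) * (t - 1/2)" by simp
  have "(t - 1/2) * (t - 1/2) = t * t - t + 1/4" by (simp add: algebra_simps)
  then show ?thesis using h unfolding power2_eq_square by linarith
qed

lemma wf_norm: "norm v \<le> wf v"
  using le_one_plus_sq[of "norm v"] unfolding wf_def norm_sq_vec by simp

lemma wf_norm2: "norm v * \<bar>v $ k\<bar> \<le> wf v"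
proof -
  have "norm v * \<bar>v $ k\<bar> \<le> norm v * norm v" by (intro mult_left_mono component_le_norm_cart) simp
  also have "\<dots> = (\<Sum>j\<in>UNIV. (v $ j)^2)" using norm_sq_vec[of v] by (simp only: power2_eq_square)
  also have "\<dots> \<le> wf v" unfolding wf_def by simp
  finally show ?thesis .
qed

lemma wf_ge1: "1 \<le> wf v" unfolding wf_def by (simp add: sum_nonneg)

lemma c0_nonneg: "0 \<le> c0 L x" unfolding c0_def by (simp add: sum_nonneg)

lemma lipD:
  assumes "l < L"
  shows "\<bar>softp L x v a l - softp L x v b l\<bar> \<le> c0 L x * wf v * \<bar>a - b\<bar>"
proof -
  have "\<bar>softp L x v a l - softp L x v b l\<bar> \<le> c0 L x * norm v * \<bar>a - b\<bar>" by (rule softp_lip[OF assms])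
  also have "\<dots> \<le> c0 L x * wf v * \<bar>a - b\<bar>"
    by (intro mult_right_mono mult_left_mono wf_norm c0_nonneg) simp_all
  finally show ?thesis .
qed

lemma lipN:
  assumes "l < L"
  shows "\<bar>softp L x v a l * v $ k - softp L x v b l * v $ k\<bar> \<le> c0 L x * wf v * \<bar>a - b\<bar>"
proof -
  have "\<bar>softp L x v a l * v $ k - softp L x v b l * v $ k\<bar> = \<bar>softp L x v a l - softp L x v b l\<bar> * \<bar>v $ k\<bar>"
    by (simp add: abs_mult left_diff_distrib[symmetric])
  also have "\<dots> \<le> (c0 L x * norm v * \<bar>a - b\<bar>) * \<bar>v $ k\<bar>"
    by (intro mult_right_mono softp_lip[OF assms]) simp
  also have "\<dots> = c0 L x * (norm v * \<bar>v $ k\<bar>) * \<bar>a - b\<bar>" by (simp add: mult_ac)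
  also have "\<dots> \<le> c0 L x * wf v * \<bar>a - b\<bar>"
    by (intro mult_right_mono mult_left_mono wf_norm2 c0_nonneg) simp_all
  finally show ?thesis .
qed

lemma avg_lip:
  fixes \<phi> :: "real \<Rightarrow> real^'d \<Rightarrow> real" and ns :: "nat \<Rightarrow> real^'d"
  assumes lip: "\<And>a b v. \<bar>\<phi> a v - \<phi> b v\<bar> \<le> C * wf v * \<bar>a - b\<bar>" and C: "C \<ge> 0"
  shows "\<bar>(\<Sum>i<m. \<phi> a (ns i)) / real m - (\<Sum>i<m. \<phi> b (ns i)) / real m\<bar>
           \<le> (C * (1 + (\<Sum>j\<in>UNIV. (\<Sum>i<m. (ns i $ j)^2) / real m))) * \<bar>a - b\<bar>"
proof (cases "m = 0")
  case True then show ?thesis using C by simp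
next
  case False
  then have m: "real m > 0" by simp
  have "\<bar>(\<Sum>i<m. \<phi> a (ns i)) / real m - (\<Sum>i<m. \<phi> b (ns i)) / real m\<bar> = \<bar>\<Sum>i<m. \<phi> a (ns i) - \<phi> b (ns i)\<bar> / real m"
    using m by (simp add: diff_divide_distrib[symmetric] sum_subtractf abs_divide)
  also have "\<dots> \<le> (\<Sum>i<m. C * wf (ns i) * \<bar>a - b\<bar>) / real m"
    using m by (intro divide_right_mono order_trans[OF sum_abs] sum_mono lip) simp_all
  also have "(\<Sum>i<m. C * wf (ns i) * \<bar>a - b\<bar>) = C * \<bar>a - b\<bar> * (\<Sum>i<m. wf (ns i))"
    by (simp add: sum_distrib_left mult_ac)
  also have "(\<Sum>i<m. wf (ns i)) = real m + (\<Sum>j\<in>UNIV. \<Sum>i<m. (ns i $ j)^2)"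
    unfolding wf_def by (simp add: sum.distrib sum.swap[of _ "{..<m}"])
  also have "C * \<bar>a - b\<bar> * (real m + (\<Sum>j\<in>UNIV. \<Sum>i<m. (ns i $ j)^2)) / real m =
      (C * (1 + (\<Sum>j\<in>UNIV. (\<Sum>i<m. (ns i $ j)^2) / real m))) * \<bar>a - b\<bar>"
    using m by (simp add: field_simps sum_divide_distrib[symmetric])
  finally show ?thesis by simp
qed

context gsetup
begin

lemma softp_meas[measurable]:
  fixes x :: "nat \<Rightarrow> real^'d"
  shows "(\<lambda>v. softp L x v b l) \<in> borel_measurable borel"
  unfolding softp_def by measurable

lemma wf_meas[measurable]: "wf \<in> borel_measurable borel"
  unfolding wf_def by measurable

lemma wf_int: "integrable M (\<lambda>\<omega>. wf (n 0 \<omega>))"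
  unfolding wf_def
  by (intro Bochner_Integration.integrable_add Bochner_Integration.integrable_sum coord_int) simp

lemma softp_int:
  fixes x :: "nat \<Rightarrow> real^'d"
  shows "l < L \<Longrightarrow> integrable M (\<lambda>\<omega>. softp L x (n i \<omega>) b l)"
  by (rule Bochner_Integration.integrable_bound[where f="\<lambda>_. 1::real"])
     (auto simp: abs_of_pos softp_pos softp_le1 intro!: AE_I2)

lemma softpN_int:
  fixes x :: "nat \<Rightarrow> real^'d"
  shows "l < L \<Longrightarrow> integrable M (\<lambda>\<omega>. softp L x (n i \<omega>) b l * n i \<omega> $ k)"
  by (rule Bochner_Integration.integrable_bound[OF coord_int1[of i k]])
     (auto simp: abs_mult abs_of_pos softp_pos softp_le1 softp_nonneg intro!: AE_I2 mult_left_le_one_le)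

lemma E_lip:
  fixes \<phi> :: "real \<Rightarrow> real^'d \<Rightarrow> real"
  assumes lip: "\<And>a b v. \<bar>\<phi> a v - \<phi> b v\<bar> \<le> C * wf v * \<bar>a - b\<bar>"
    and int: "\<And>a. integrable M (\<lambda>\<omega>. \<phi> a (n 0 \<omega>))"
  shows "\<bar>expectation (\<lambda>\<omega>. \<phi> a (n 0 \<omega>)) - expectation (\<lambda>\<omega>. \<phi> b (n 0 \<omega>))\<bar>
           \<le> C * expectation (\<lambda>\<omega>. wf (n 0 \<omega>)) * \<bar>a - b\<bar>"
proof -
  have "expectation (\<lambda>\<omega>. \<phi> a (n 0 \<omega>)) - expectation (\<lambda>\<omega>. \<phi> b (n 0 \<omega>)) =
        expectation (\<lambda>\<omega>. \<phi> a (n 0 \<omega>) - \<phi> b (n 0 \<omega>))"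
    by (rule Bochner_Integration.integral_diff[symmetric, OF int int])
  also have "\<bar>\<dots>\<bar> \<le> expectation (\<lambda>\<omega>. \<bar>\<phi> a (n 0 \<omega>) - \<phi> b (n 0 \<omega>)\<bar>)" by (rule integral_abs_bound)
  also have "\<dots> \<le> expectation (\<lambda>\<omega>. C * \<bar>a - b\<bar> * wf (n 0 \<omega>))"
  proof (rule integral_mono)
    show "integrable M (\<lambda>\<omega>. \<bar>\<phi> a (n 0 \<omega>) - \<phi> b (n 0 \<omega>)\<bar>)" using int by simp
    show "integrable M (\<lambda>\<omega>. C * \<bar>a - b\<bar> * wf (n 0 \<omega>))" using wf_int by simp
    show "\<bar>\<phi> a (n 0 \<omega>) - \<phi> b (n 0 \<omega>)\<bar> \<le> C * \<bar>a - b\<bar> * wf (n 0 \<omega>)" for \<omega>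
      using lip[of a "n 0 \<omega>" b] by (simp add: mult_ac)
  qed
  also have "\<dots> = C * expectation (\<lambda>\<omega>. wf (n 0 \<omega>)) * \<bar>a - b\<bar>" by (simp add: mult_ac)
  finally show ?thesis .
qed

end


context gsetup
begin

lemma conv_all:
  fixes x :: "nat \<Rightarrow> real^'d"
  assumes l: "l < L"
  shows "AE \<omega> in M. \<forall>\<beta>. (\<lambda>m. (\<Sum>i<m. softp L x (n i \<omega>) \<beta> l) / real m) \<longlonglongrightarrow> expectation (\<lambda>\<omega>. softp L x (n 0 \<omega>) \<beta> l)
          \<and> (\<forall>k. (\<lambda>m. (\<Sum>i<m. softp L x (n i \<omega>) \<beta> l * n i \<omega> $ k) / real m) \<longlonglongrightarrow>
                   expectation (\<lambda>\<omega>. softp L x (n 0 \<omega>) \<beta> l * n 0 \<omega> $ k))"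
proof -
  have A1: "AE \<omega> in M. \<forall>q\<in>\<rat>. (\<lambda>m. (\<Sum>i<m. softp L x (n i \<omega>) q l) / real m) \<longlonglongrightarrow> expectation (\<lambda>\<omega>. softp L x (n 0 \<omega>) q l)"
  proof (subst AE_ball_countable[OF countable_rat], intro ballI)
    fix q :: real
    show "AE \<omega> in M. (\<lambda>m. (\<Sum>i<m. softp L x (n i \<omega>) q l) / real m) \<longlonglongrightarrow> expectation (\<lambda>\<omega>. softp L x (n 0 \<omega>) q l)"
    proof (rule slln_h)
      show "integrable M (\<lambda>\<omega>. (softp L x (n 0 \<omega>) q l)\<^sup>2)"
        by (rule Bochner_Integration.integrable_bound[where f="\<lambda>_. 1::real"])
           (auto intro!: AE_I2 simp: abs_square_le_1 softp_nonneg[OF l] softp_le1[OF l])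
    qed simp
  qed
  have A2: "AE \<omega> in M. \<forall>q\<in>\<rat>. \<forall>k. (\<lambda>m. (\<Sum>i<m. softp L x (n i \<omega>) q l * n i \<omega> $ k) / real m) \<longlonglongrightarrow>
               expectation (\<lambda>\<omega>. softp L x (n 0 \<omega>) q l * n 0 \<omega> $ k)"
  proof (subst AE_ball_countable[OF countable_rat], intro ballI, subst AE_all_countable, intro allI)
    fix q :: real and k :: 'd
    show "AE \<omega> in M. (\<lambda>m. (\<Sum>i<m. softp L x (n i \<omega>) q l * n i \<omega> $ k) / real m) \<longlonglongrightarrow>
               expectation (\<lambda>\<omega>. softp L x (n 0 \<omega>) q l * n 0 \<omega> $ k)"
    proof (rule slln_h[where h="\<lambda>v. softp L x v q l * v $ k"])
      have b: "(softp L x v q l * v $ k)\<^sup>2 \<le> (v $ k)\<^sup>2" for v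
      proof -
        have "(softp L x v q l)\<^sup>2 \<le> 1"
          by (simp add: abs_square_le_1 softp_nonneg[OF l] softp_le1[OF l])
        then have "(softp L x v q l)\<^sup>2 * (v $ k)\<^sup>2 \<le> 1 * (v $ k)\<^sup>2" by (intro mult_right_mono) simp_all
        then show ?thesis by (simp add: power_mult_distrib)
      qed
      show "integrable M (\<lambda>\<omega>. (softp L x (n 0 \<omega>) q l * n 0 \<omega> $ k)\<^sup>2)"
        by (rule Bochner_Integration.integrable_bound[OF coord_int[of 0 k 2]])
           (auto intro!: AE_I2 simp: b)
    qed simp
  qed
  have A3: "AE \<omega> in M. \<forall>j. (\<lambda>m. (\<Sum>i<m. (n i \<omega> $ j)^2) / real m) \<longlonglongrightarrow> expectation (\<lambda>\<omega>. (n 0 \<omega> $ j)^2)"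
  proof (subst AE_all_countable, intro allI)
    fix j :: 'd
    show "AE \<omega> in M. (\<lambda>m. (\<Sum>i<m. (n i \<omega> $ j)^2) / real m) \<longlonglongrightarrow> expectation (\<lambda>\<omega>. (n 0 \<omega> $ j)^2)"
    proof (rule slln_h[where h="\<lambda>v. (v $ j)^2"])
      have "(\<lambda>\<omega>. ((n 0 \<omega> $ j)^2)^2) = (\<lambda>\<omega>. (n 0 \<omega> $ j)^4)"
        by (simp add: fun_eq_iff power_mult[symmetric])
      then show "integrable M (\<lambda>\<omega>. ((n 0 \<omega> $ j)^2)^2)" using coord_int[of 0 j 4] by simp
    qed simp
  qed
  show ?thesis using A1 A2 A3
  proof eventually_elim
    case (elim \<omega>)
    define K where "K m = c0 L x * (1 + (\<Sum>j\<in>UNIV. (\<Sum>i<m. (n i \<omega> $ j)^2) / real m))" for m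
    define K0 where "K0 = c0 L x * (1 + (\<Sum>j\<in>UNIV. expectation (\<lambda>\<omega>. (n 0 \<omega> $ j)^2)))"
    have KK: "K \<longlonglongrightarrow> K0" unfolding K_def K0_def
      by (intro tendsto_intros) (use elim(3) in auto)
    define EW where "EW = expectation (\<lambda>\<omega>. wf (n 0 \<omega>))"
    show ?case
    proof (intro allI conjI)
      fix \<beta> :: real
      show "(\<lambda>m. (\<Sum>i<m. softp L x (n i \<omega>) \<beta> l) / real m) \<longlonglongrightarrow> expectation (\<lambda>\<omega>. softp L x (n 0 \<omega>) \<beta> l)"
      proof (rule unif_conv[where f="\<lambda>m b. (\<Sum>i<m. softp L x (n i \<omega>) b l) / real m"
            and F="\<lambda>b. expectation (\<lambda>\<omega>. softp L x (n 0 \<omega>) b l)" and K=K and Klim=K0 and c="c0 L x * EW"])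
        show "\<And>q. q \<in> \<rat> \<Longrightarrow> (\<lambda>m. (\<Sum>i<m. softp L x (n i \<omega>) q l) / real m) \<longlonglongrightarrow> expectation (\<lambda>\<omega>. softp L x (n 0 \<omega>) q l)"
          using elim(1) by blast
        show "K \<longlonglongrightarrow> K0" by (rule KK)
        show "\<bar>(\<Sum>i<m. softp L x (n i \<omega>) a l) / real m - (\<Sum>i<m. softp L x (n i \<omega>) b l) / real m\<bar> \<le> K m * \<bar>a - b\<bar>" for m a b
          unfolding K_def by (rule avg_lip[where \<phi>="\<lambda>b v. softp L x v b l"]) (rule lipD[OF l], rule c0_nonneg)
        show "\<bar>expectation (\<lambda>\<omega>. softp L x (n 0 \<omega>) a l) - expectation (\<lambda>\<omega>. softp L x (n 0 \<omega>) b l)\<bar> \<le> c0 L x * EW * \<bar>a - b\<bar>" for a b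
          unfolding EW_def by (rule E_lip[where \<phi>="\<lambda>b v. softp L x v b l"]) (rule lipD[OF l], rule softp_int[OF l])
      qed
      fix k :: 'd
      show "(\<lambda>m. (\<Sum>i<m. softp L x (n i \<omega>) \<beta> l * n i \<omega> $ k) / real m) \<longlonglongrightarrow>
                   expectation (\<lambda>\<omega>. softp L x (n 0 \<omega>) \<beta> l * n 0 \<omega> $ k)"
      proof (rule unif_conv[where f="\<lambda>m b. (\<Sum>i<m. softp L x (n i \<omega>) b l * n i \<omega> $ k) / real m"
            and F="\<lambda>b. expectation (\<lambda>\<omega>. softp L x (n 0 \<omega>) b l * n 0 \<omega> $ k)" and K=K and Klim=K0 and c="c0 L x * EW"])
        show "\<And>q. q \<in> \<rat> \<Longrightarrow> (\<lambda>m. (\<Sum>i<m. softp L x (n i \<omega>) q l * n i \<omega> $ k) / real m) \<longlonglongrightarrow>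
               expectation (\<lambda>\<omega>. softp L x (n 0 \<omega>) q l * n 0 \<omega> $ k)"
          using elim(2) by blast
        show "K \<longlonglongrightarrow> K0" by (rule KK)
        show "\<bar>(\<Sum>i<m. softp L x (n i \<omega>) a l * n i \<omega> $ k) / real m - (\<Sum>i<m. softp L x (n i \<omega>) b l * n i \<omega> $ k) / real m\<bar> \<le> K m * \<bar>a - b\<bar>" for m a b
          unfolding K_def by (rule avg_lip[where \<phi>="\<lambda>b v. softp L x v b l * v $ k"]) (rule lipN[OF l], rule c0_nonneg)
        show "\<bar>expectation (\<lambda>\<omega>. softp L x (n 0 \<omega>) a l * n 0 \<omega> $ k) - expectation (\<lambda>\<omega>. softp L x (n 0 \<omega>) b l * n 0 \<omega> $ k)\<bar> \<le> c0 L x * EW * \<bar>a - b\<bar>" for a b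
          unfolding EW_def by (rule E_lip[where \<phi>="\<lambda>b v. softp L x v b l * v $ k"]) (rule lipN[OF l], rule softpN_int[OF l])
      qed
    qed
  qed
qed

end


context gsetup
begin

lemma ED_pos:
  fixes x :: "nat \<Rightarrow> real^'d"
  assumes l: "l < L"
  shows "expectation (\<lambda>\<omega>. softp L x (n 0 \<omega>) \<beta> l) > 0"
proof -
  have i: "integrable M (\<lambda>\<omega>. softp L x (n 0 \<omega>) \<beta> l)" by (rule softp_int[OF l])
  have nn: "AE \<omega> in M. 0 \<le> softp L x (n 0 \<omega>) \<beta> l" by (intro AE_I2 softp_nonneg[OF l])
  have ge: "expectation (\<lambda>\<omega>. softp L x (n 0 \<omega>) \<beta> l) \<ge> 0"
    by (rule integral_nonneg_AE[OF nn])
  have "expectation (\<lambda>\<omega>. softp L x (n 0 \<omega>) \<beta> l) \<noteq> 0"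
  proof
    assume "expectation (\<lambda>\<omega>. softp L x (n 0 \<omega>) \<beta> l) = 0"
    then have "AE \<omega> in M. softp L x (n 0 \<omega>) \<beta> l = 0"
      using integral_nonneg_eq_0_iff_AE[OF i nn] by simp
    then have "AE \<omega> in M. False"
    proof (rule AE_mp, intro AE_I2 impI)
      fix \<omega> assume "softp L x (n 0 \<omega>) \<beta> l = 0"
      with softp_pos[OF l, of x "n 0 \<omega>" \<beta>] show False by simp
    qed
    then show False by (simp add: AE_False)
  qed
  with ge show ?thesis by simp
qed

lemma ED_lim0:
  fixes x :: "nat \<Rightarrow> real^'d"
  assumes l: "l < L"
  shows "((\<lambda>\<beta>. expectation (\<lambda>\<omega>. softp L x (n 0 \<omega>) \<beta> l)) \<longlongrightarrow> 1 / real L) (at 0)"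
proof -
  have E0: "expectation (\<lambda>\<omega>. softp L x (n 0 \<omega>) 0 l) = 1 / real L"
    by (simp add: softp_zero[OF l] prob_space)
  have "((\<lambda>\<beta>. expectation (\<lambda>\<omega>. softp L x (n 0 \<omega>) \<beta> l) - 1 / real L) \<longlongrightarrow> 0) (at 0)"
  proof (rule tendsto_0_le[where f="\<lambda>\<beta>. \<beta>" and K="c0 L x * expectation (\<lambda>\<omega>. wf (n 0 \<omega>))"])
    show "((\<lambda>\<beta>::real. \<beta>) \<longlongrightarrow> 0) (at 0)" by (rule tendsto_ident_at)
    show "\<forall>\<^sub>F \<beta> in at 0. norm (expectation (\<lambda>\<omega>. softp L x (n 0 \<omega>) \<beta> l) - 1 / real L)
            \<le> norm \<beta> * (c0 L x * expectation (\<lambda>\<omega>. wf (n 0 \<omega>)))"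
    proof (rule always_eventually, rule allI)
      fix \<beta> :: real
      have "\<bar>expectation (\<lambda>\<omega>. softp L x (n 0 \<omega>) \<beta> l) - expectation (\<lambda>\<omega>. softp L x (n 0 \<omega>) 0 l)\<bar>
             \<le> c0 L x * expectation (\<lambda>\<omega>. wf (n 0 \<omega>)) * \<bar>\<beta> - 0\<bar>"
        by (rule E_lip[where \<phi>="\<lambda>b v. softp L x v b l"]) (rule lipD[OF l], rule softp_int[OF l])
      then show "norm (expectation (\<lambda>\<omega>. softp L x (n 0 \<omega>) \<beta> l) - 1 / real L)
            \<le> norm \<beta> * (c0 L x * expectation (\<lambda>\<omega>. wf (n 0 \<omega>)))"
        unfolding E0 by (simp add: mult_ac)
    qed
  qed
  from tendsto_add[OF this tendsto_const[of "1 / real L"]] show ?thesis by simp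
qed

lemma inner_moment_int: "integrable M (\<lambda>\<omega>. (n i \<omega> \<bullet> y) * n i \<omega> $ k)"
proof -
  have "(\<lambda>\<omega>. (n i \<omega> \<bullet> y) * n i \<omega> $ k) = (\<lambda>\<omega>. \<Sum>j\<in>UNIV. y $ j * (n i \<omega> $ j * n i \<omega> $ k))"
    by (simp add: inner_vec_def sum_distrib_left sum_distrib_right mult_ac)
  then show ?thesis by (simp add: coord_cross_int)
qed

lemma EN_deriv:
  fixes x :: "nat \<Rightarrow> real^'d"
  assumes l: "l < L"
  shows "((\<lambda>\<beta>. expectation (\<lambda>\<omega>. softp L x (n 0 \<omega>) \<beta> l * n 0 \<omega> $ k) / \<beta>) \<longlongrightarrow>
          (x l $ k / real L - (\<Sum>r<L. x r $ k) / (real L)\<^sup>2)) (at 0)"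
proof -
  define s where "s \<beta> \<omega> = (softp L x (n 0 \<omega>) \<beta> l - 1 / real L) / \<beta> * n 0 \<omega> $ k" for \<beta> \<omega>
  define D where "D \<omega> = ((n 0 \<omega> \<bullet> x l) / real L - (\<Sum>r<L. n 0 \<omega> \<bullet> x r) / (real L)\<^sup>2) * n 0 \<omega> $ k" for \<omega>
  have eq: "expectation (\<lambda>\<omega>. softp L x (n 0 \<omega>) \<beta> l * n 0 \<omega> $ k) / \<beta> = expectation (s \<beta>)" for \<beta>
  proof -
    have i1: "integrable M (\<lambda>\<omega>. (softp L x (n 0 \<omega>) \<beta> l - 1 / real L) * n 0 \<omega> $ k)"
      using softpN_int[OF l, where i=0 and b=\<beta> and k=k] coord_int1[of 0 k] by (simp add: left_diff_distrib)
    have i2: "integrable M (\<lambda>\<omega>. 1 / real L * n 0 \<omega> $ k)" using coord_int1[of 0 k] by simp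
    have "expectation (\<lambda>\<omega>. softp L x (n 0 \<omega>) \<beta> l * n 0 \<omega> $ k) =
          expectation (\<lambda>\<omega>. (softp L x (n 0 \<omega>) \<beta> l - 1 / real L) * n 0 \<omega> $ k + 1 / real L * n 0 \<omega> $ k)"
      by (simp add: algebra_simps)
    also have "\<dots> = expectation (\<lambda>\<omega>. (softp L x (n 0 \<omega>) \<beta> l - 1 / real L) * n 0 \<omega> $ k)
                    + expectation (\<lambda>\<omega>. 1 / real L * n 0 \<omega> $ k)"
      by (rule Bochner_Integration.integral_add[OF i1 i2])
    also have "expectation (\<lambda>\<omega>. 1 / real L * n 0 \<omega> $ k) = 0" by (simp add: coord_mean)
    finally have "expectation (\<lambda>\<omega>. softp L x (n 0 \<omega>) \<beta> l * n 0 \<omega> $ k) / \<beta>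
        = expectation (\<lambda>\<omega>. (softp L x (n 0 \<omega>) \<beta> l - 1 / real L) * n 0 \<omega> $ k) / \<beta>" by simp
    also have "\<dots> = expectation (\<lambda>\<omega>. (softp L x (n 0 \<omega>) \<beta> l - 1 / real L) * n 0 \<omega> $ k / \<beta>)"
      by simp
    also have "(\<lambda>\<omega>. (softp L x (n 0 \<omega>) \<beta> l - 1 / real L) * n 0 \<omega> $ k / \<beta>) = s \<beta>"
      by (simp add: s_def fun_eq_iff)
    finally show ?thesis .
  qed
  have Dval: "expectation D = x l $ k / real L - (\<Sum>r<L. x r $ k) / (real L)\<^sup>2"
  proof -
    have "D = (\<lambda>\<omega>. (n 0 \<omega> \<bullet> x l) * n 0 \<omega> $ k / real L - (\<Sum>r<L. (n 0 \<omega> \<bullet> x r) * n 0 \<omega> $ k) / (real L)\<^sup>2)"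
      by (simp add: D_def fun_eq_iff left_diff_distrib sum_distrib_right)
    then have "expectation D = expectation (\<lambda>\<omega>. (n 0 \<omega> \<bullet> x l) * n 0 \<omega> $ k) / real L
        - (\<Sum>r<L. expectation (\<lambda>\<omega>. (n 0 \<omega> \<bullet> x r) * n 0 \<omega> $ k)) / (real L)\<^sup>2"
      by (simp add: inner_moment_int Bochner_Integration.integral_sum)
    then show ?thesis by (simp add: inner_moment)
  qed
  have "((\<lambda>\<beta>. expectation (s \<beta>)) \<longlongrightarrow> expectation D) (at 0)"
  proof (subst tendsto_at_iff_sequentially, intro allI impI)
    fix X :: "nat \<Rightarrow> real" assume X0: "\<forall>i. X i \<in> UNIV - {0}" and X: "X \<longlonglongrightarrow> 0"
    have Xat: "filterlim X (at 0) sequentially"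
      by (rule filterlim_atI[OF X]) (use X0 in auto)
    show "((\<lambda>\<beta>. expectation (s \<beta>)) \<circ> X) \<longlonglongrightarrow> expectation D"
      unfolding comp_def
    proof (rule integral_dominated_convergence[where w="\<lambda>\<omega>. c0 L x * wf (n 0 \<omega>)"])
      show "D \<in> borel_measurable M" unfolding D_def by measurable
      show "s (X i) \<in> borel_measurable M" for i unfolding s_def by measurable
      show "integrable M (\<lambda>\<omega>. c0 L x * wf (n 0 \<omega>))" using wf_int by simp
      show "AE \<omega> in M. (\<lambda>i. s (X i) \<omega>) \<longlonglongrightarrow> D \<omega>"
      proof (rule AE_I2)
        fix \<omega>
        have "((\<lambda>b. (softp L x (n 0 \<omega>) b l - 1 / real L) / b) \<longlongrightarrow>
            (n 0 \<omega> \<bullet> x l) / real L - (\<Sum>r<L. n 0 \<omega> \<bullet> x r) / (real L)\<^sup>2) (at 0)"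
          by (rule softp_deriv0[OF l])
        from filterlim_compose[OF this Xat]
        show "(\<lambda>i. s (X i) \<omega>) \<longlonglongrightarrow> D \<omega>"
          unfolding s_def D_def by (intro tendsto_mult tendsto_const)
      qed
      show "AE \<omega> in M. norm (s (X i) \<omega>) \<le> c0 L x * wf (n 0 \<omega>)" for i
      proof (rule AE_I2)
        fix \<omega>
        have Xi: "\<bar>X i\<bar> > 0" using X0 by auto
        have lip: "\<bar>softp L x (n 0 \<omega>) (X i) l - softp L x (n 0 \<omega>) 0 l\<bar> \<le> c0 L x * norm (n 0 \<omega>) * \<bar>X i - 0\<bar>"
          by (rule softp_lip[OF l])
        then have "\<bar>softp L x (n 0 \<omega>) (X i) l - 1 / real L\<bar> / \<bar>X i\<bar> \<le> c0 L x * norm (n 0 \<omega>)"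
          using Xi by (simp add: softp_zero[OF l] pos_divide_le_eq)
        then have "\<bar>softp L x (n 0 \<omega>) (X i) l - 1 / real L\<bar> / \<bar>X i\<bar> * \<bar>n 0 \<omega> $ k\<bar> \<le> c0 L x * norm (n 0 \<omega>) * \<bar>n 0 \<omega> $ k\<bar>"
          by (rule mult_right_mono) simp
        also have "\<dots> = c0 L x * (norm (n 0 \<omega>) * \<bar>n 0 \<omega> $ k\<bar>)" by (simp add: mult_ac)
        also have "\<dots> \<le> c0 L x * wf (n 0 \<omega>)" by (intro mult_left_mono wf_norm2 c0_nonneg)
        finally show "norm (s (X i) \<omega>) \<le> c0 L x * wf (n 0 \<omega>)"
          by (simp add: s_def abs_mult abs_divide)
      qed
    qed
  qed
  then show ?thesis unfolding eq Dval .
qed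

end


context gsetup
begin

lemma part2:
  fixes x :: "nat \<Rightarrow> real^'d"
  assumes l: "l < L"
  shows "AE \<omega> in M. \<exists>g :: real \<Rightarrow> real ^ 'd.
            (\<forall>\<beta>. \<beta> \<noteq> 0 \<longrightarrow> (\<lambda>m. xhat L x (\<lambda>i. n i \<omega>) m \<beta> l) \<longlonglongrightarrow> g \<beta>)
            \<and> ((\<lambda>\<beta>. (1 / \<beta>) *\<^sub>R g \<beta>) \<longlongrightarrow> x l - (1 / real L) *\<^sub>R (\<Sum>r<L. x r)) (at 0)"
proof -
  define ED where "ED \<beta> = expectation (\<lambda>\<omega>. softp L x (n 0 \<omega>) \<beta> l)" for \<beta>
  define EN where "EN \<beta> k = expectation (\<lambda>\<omega>. softp L x (n 0 \<omega>) \<beta> l * n 0 \<omega> $ k)" for \<beta> k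
  define g where "g \<beta> = inverse (ED \<beta>) *\<^sub>R (\<chi> k. EN \<beta> k)" for \<beta>
  have Lpos: "real L > 0" using l by simp
  have glim: "((\<lambda>\<beta>. (1 / \<beta>) *\<^sub>R g \<beta>) \<longlongrightarrow> x l - (1 / real L) *\<^sub>R (\<Sum>r<L. x r)) (at 0)"
  proof -
    have feq: "(\<lambda>\<beta>. (1 / \<beta>) *\<^sub>R g \<beta>) = (\<lambda>\<beta>. inverse (ED \<beta>) *\<^sub>R (\<chi> k. EN \<beta> k / \<beta>))"
      by (simp add: g_def fun_eq_iff vec_eq_iff divide_inverse mult_ac)
    have "((\<lambda>\<beta>. inverse (ED \<beta>) *\<^sub>R (\<chi> k. EN \<beta> k / \<beta>)) \<longlongrightarrow>
        inverse (1 / real L) *\<^sub>R (\<chi> k. x l $ k / real L - (\<Sum>r<L. x r $ k) / (real L)\<^sup>2)) (at 0)"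
      unfolding ED_def EN_def
      by (intro tendsto_scaleR tendsto_inverse tendsto_vec_lambda ED_lim0[OF l] EN_deriv[OF l]) (use Lpos in simp)
    moreover have "inverse (1 / real L) *\<^sub>R (\<chi> k. x l $ k / real L - (\<Sum>r<L. x r $ k) / (real L)\<^sup>2)
        = x l - (1 / real L) *\<^sub>R (\<Sum>r<L. x r)"
      using Lpos by (simp add: vec_eq_iff field_simps power2_eq_square)
    ultimately show ?thesis unfolding feq by simp
  qed
  show ?thesis using conv_all[where x=x, OF l]
  proof eventually_elim
    case (elim \<omega>)
    have "(\<lambda>m. xhat L x (\<lambda>i. n i \<omega>) m \<beta> l) \<longlonglongrightarrow> g \<beta>" for \<beta>
    proof -
      have D: "(\<lambda>m. (\<Sum>i<m. softp L x (n i \<omega>) \<beta> l) / real m) \<longlonglongrightarrow> ED \<beta>"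
        using elim unfolding ED_def by blast
      have N: "(\<lambda>m. (\<Sum>i<m. softp L x (n i \<omega>) \<beta> l * n i \<omega> $ k) / real m) \<longlonglongrightarrow> EN \<beta> k" for k
        using elim unfolding EN_def by blast
      have pos: "ED \<beta> \<noteq> 0" unfolding ED_def using ED_pos[OF l, of x \<beta>] by simp
      have lim: "(\<lambda>m. inverse ((\<Sum>i<m. softp L x (n i \<omega>) \<beta> l) / real m) *\<^sub>R
                      (\<chi> k. (\<Sum>i<m. softp L x (n i \<omega>) \<beta> l * n i \<omega> $ k) / real m)) \<longlonglongrightarrow> g \<beta>"
        unfolding g_def by (intro tendsto_scaleR tendsto_inverse tendsto_vec_lambda D N pos)
      have ev: "\<forall>\<^sub>F m in sequentially. inverse ((\<Sum>i<m. softp L x (n i \<omega>) \<beta> l) / real m) *\<^sub>R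
                      (\<chi> k. (\<Sum>i<m. softp L x (n i \<omega>) \<beta> l * n i \<omega> $ k) / real m) = xhat L x (\<lambda>i. n i \<omega>) m \<beta> l"
      proof (rule eventually_mono[OF eventually_gt_at_top[of "0::nat"]])
        fix m :: nat assume "0 < m"
        then have m: "real m \<noteq> 0" by simp
        show "inverse ((\<Sum>i<m. softp L x (n i \<omega>) \<beta> l) / real m) *\<^sub>R
                      (\<chi> k. (\<Sum>i<m. softp L x (n i \<omega>) \<beta> l * n i \<omega> $ k) / real m) = xhat L x (\<lambda>i. n i \<omega>) m \<beta> l"
          unfolding xhat_def using m by (simp add: vec_eq_iff divide_inverse mult_ac)
      qed
      show ?thesis by (rule Lim_transform_eventually[OF lim ev])
    qed
    then show ?case using glim by blast
  qed
qed

end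

theorem proposition1:
  fixes P :: "'w measure"
    and L :: nat
    and x :: "nat \<Rightarrow> real ^ 'd"
    and n :: "nat \<Rightarrow> 'w \<Rightarrow> real ^ 'd"
    and l :: nat
  assumes "prob_space P"
    and "L \<ge> 2"
    and "\<And>r s. r < L \<Longrightarrow> s < L \<Longrightarrow> r \<noteq> s \<Longrightarrow> x r \<noteq> x s"
    and "\<And>r s. r < L \<Longrightarrow> s < L \<Longrightarrow> norm (x r) = norm (x s)"
    and "prob_space.indep_vars P (\<lambda>_. borel) (\<lambda>(i, k) \<omega>. n i \<omega> $ k) UNIV"
    and "\<And>i k. distributed P lborel (\<lambda>\<omega>. n i \<omega> $ k) (\<lambda>t. ennreal (std_normal_density t))"
    and "l < L"
  shows "(\<forall>m. AE \<omega> in P. hard_set L x (\<lambda>i. n i \<omega>) m l \<noteq> {} \<longrightarrow>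
            ((\<lambda>\<beta>. xhat L x (\<lambda>i. n i \<omega>) m \<beta> l) \<longlongrightarrow> hard_est L x (\<lambda>i. n i \<omega>) m l) at_top)
       \<and> (AE \<omega> in P. \<exists>g :: real \<Rightarrow> real ^ 'd.
            (\<forall>\<beta>. \<beta> \<noteq> 0 \<longrightarrow> (\<lambda>m. xhat L x (\<lambda>i. n i \<omega>) m \<beta> l) \<longlonglongrightarrow> g \<beta>)
            \<and> ((\<lambda>\<beta>. (1 / \<beta>) *\<^sub>R g \<beta>) \<longlongrightarrow> x l - (1 / real L) *\<^sub>R (\<Sum>r<L. x r)) (at 0))"
proof -
  interpret G: gsetup P n
  proof (rule gsetup.intro)
    show "prob_space P" by (rule assms(1))
    show "gsetup_axioms P n"
      by (rule gsetup_axioms.intro) (use assms(5,6) in auto)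
  qed
  show ?thesis
    using G.part1[where x=x, OF assms(7) assms(3)] G.part2[where x=x, OF assms(7)] by blast
qed

end
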